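(* Let $(A,B,P)$ be a tetrablock contraction on $\mathcal H$ with fundamental operators $F_1,F_2\in\mathcal B(\mathcal D_P)$, let $\Xi\in\mathcal B(\mathcal D_P)$, and on $\mathcal K=\mathcal H\oplus\ell^2(\mathcal D_P)$ let $$V_1=\begin{pmatrix}A&0\\ C_1&T_{\varphi_1}\end{pmatrix},\quad V_2=\begin{pmatrix}B&0\\ C_2&T_{\varphi_2}\end{pmatrix},\quad V_3=\begin{pmatrix}P&0\\ C_3&T_{z^2}\end{pmatrix},$$ where $\varphi_1(z)=F_1+\Xi z+F_2^*z^2$, $\varphi_2(z)=F_2+\Xi^*z+F_1^*z^2$, and for $h\in\mathcal H$: $C_1h=(\Xi D_Ph,F_2^*D_Ph,0,0,\dots)$, $C_2h=(\Xi^*D_Ph,F_1^*D_Ph,0,0,\dots)$, $C_3h=(0,D_Ph,0,0,\dots)$. Then $V_1,V_2,V_3$ pairwise commute if and only if (i) $(\Xi F_1^*-\Xi^*F_2^* )D_PP=0$; (ii) $[F_2,F_2^*]-[F_1,F_1^*]=[\Xi,\Xi^*]$; (iii) $[F_1,F_2]=0$; (iv) $[\Xi,F_2]=[\Xi^*,F_1]$; (v) $\Xi D_PP=0$ and $\Xi^*D_PP=0$. Here $[X,Y]=XY-YX$.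
   Context: The closed tetrablock is $\overline{\mathbb E}=\{(a_{11},a_{22},\det M): M=(a_{ij})\in\mathbb M_2(\mathbb C),\ \|M\|\le1\}$. A tetrablock contraction is a commuting triple $(A,B,P)$ of bounded operators on a Hilbert space whose Taylor joint spectrum lies in $\overline{\mathbb E}$ and with $\|f(A,B,P)\|\le\sup_{\overline{\mathbb E}}|f|$ for every rational $f$ with poles off $\overline{\mathbb E}$. For a contraction $P$, $D_P=(I-P^*P)^{1/2}$ and $\mathcal D_P=\overline{\operatorname{Ran}}D_P$. For a tetrablock contraction $(A,B,P)$ there are unique $F_1,F_2\in\mathcal B(\mathcal D_P)$, the fundamental operators, with $A-B^*P=D_PF_1D_P$ and $B-A^*P=D_PF_2D_P$. For a Hilbert space $\mathcal E$, $\ell^2(\mathcal E)=\mathcal E\oplus\mathcal E\oplus\cdots$ is identified with the Hardy space $H^2_{\mathbb D}(\mathcal E)$ via $(e_n)\mapsto\sum e_nz^n$. For $\varphi\in L^\infty_{\mathbb T}(\mathcal B(\mathcal E))$ the Toeplitz operator $T_\varphi$ is the compression to $H^2_{\mathbb D}(\mathcal E)$ of multiplication by $\varphi$ on $L^2_{\mathbb T}(\mathcal E)$; for a polynomial $\varphi(z)=\sum_{n=0}^N\Phi_nz^n$ it acts by $(T_\varphi f)(z)=\varphi(z)f(z)$, with block matrix $(\Phi_{i-j})_{i,j\ge0}$ ($\Phi_k=0$ for $k<0$ or $k>N$). In particular $T_{z^2}(e_0,e_1,\dots)=(0,0,e_0,e_1,\dots)$. *)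

theory Defs
  imports "HOL-Analysis.Analysis"
begin

class chilbert = ab_group_add +
  fixes scaleC :: "complex \<Rightarrow> 'a \<Rightarrow> 'a"  (infixr "*\<^sub>C" 75)
  fixes cinner :: "'a \<Rightarrow> 'a \<Rightarrow> complex"
  assumes scaleC_add_right: "c *\<^sub>C (x + y) = c *\<^sub>C x + c *\<^sub>C y"
    and scaleC_add_left: "(c + d) *\<^sub>C x = c *\<^sub>C x + d *\<^sub>C x"
    and scaleC_scaleC: "c *\<^sub>C (d *\<^sub>C x) = (c * d) *\<^sub>C x"
    and scaleC_one: "1 *\<^sub>C x = x"
    and cinner_add_right: "cinner x (y + z) = cinner x y + cinner x z"
    and cinner_scaleC_right: "cinner x (c *\<^sub>C y) = c * cinner x y"
    and cinner_commute: "cinner y x = cnj (cinner x y)"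
    and cinner_nonneg: "0 \<le> Re (cinner x x)"
    and cinner_eq_zero: "cinner x x = 0 \<Longrightarrow> x = 0"
    and chilbert_complete:
      "(\<forall>e>0. \<exists>N::nat. \<forall>m\<ge>N. \<forall>n\<ge>N. sqrt (Re (cinner (X m - X n) (X m - X n))) < e)
        \<Longrightarrow> (\<exists>L. \<forall>e>0. \<exists>N::nat. \<forall>n\<ge>N. sqrt (Re (cinner (X n - L) (X n - L))) < e)"

definition cnorm :: "'a::chilbert \<Rightarrow> real" where
  "cnorm x = sqrt (Re (cinner x x))"

text \<open>Operators are functions on the Hilbert space; an operator in B(S), for a
  (closed) subspace S, is a map that sends S into S and is complex linear and bounded on S.
  Two operators in B(S) are equal iff they agree on S.\<close>

definition bop :: "'a::chilbert set \<Rightarrow> ('a \<Rightarrow> 'a) \<Rightarrow> bool" where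
  "bop S T \<longleftrightarrow> (\<forall>x\<in>S. T x \<in> S)
     \<and> (\<forall>x\<in>S. \<forall>y\<in>S. T (x + y) = T x + T y)
     \<and> (\<forall>c. \<forall>x\<in>S. T (c *\<^sub>C x) = c *\<^sub>C T x)
     \<and> (\<exists>K. \<forall>x\<in>S. cnorm (T x) \<le> K * cnorm x)"

definition adj :: "'a::chilbert set \<Rightarrow> ('a \<Rightarrow> 'a) \<Rightarrow> ('a \<Rightarrow> 'a)" where
  "adj S T = (SOME T'. bop S T' \<and> (\<forall>x\<in>S. \<forall>y\<in>S. cinner (T x) y = cinner x (T' y)))"

definition posop :: "('a::chilbert \<Rightarrow> 'a) \<Rightarrow> bool" where
  "posop T \<longleftrightarrow> bop UNIV T \<and> (\<forall>x y. cinner (T x) y = cinner x (T y))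
     \<and> (\<forall>x. 0 \<le> Re (cinner x (T x)))"

definition defect :: "('a::chilbert \<Rightarrow> 'a) \<Rightarrow> ('a \<Rightarrow> 'a)" where
  "defect P = (THE D. posop D \<and> (\<forall>x. D (D x) = x - adj UNIV P (P x)))"

definition defect_space :: "('a::chilbert \<Rightarrow> 'a) \<Rightarrow> 'a set" where
  "defect_space P = {x. \<forall>e>0. \<exists>y. cnorm (x - defect P y) < e}"

definition tetrablock_closed :: "(complex \<times> complex \<times> complex) set" where
  "tetrablock_closed = {(M $ 1 $ 1, M $ 2 $ 2, det M) | M :: complex^2^2.
                          \<forall>x. norm (M *v x) \<le> norm x}"

text \<open>Taylor joint spectrum of a commuting triple, via exactness of the Koszul complex
  0 -> H -> H^3 -> H^3 -> H -> 0 of (S1,S2,S3) = (T1 - l1, T2 - l2, T3 - l3).\<close>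

definition koszul_exact :: "('a::chilbert \<Rightarrow> 'a) \<Rightarrow> ('a \<Rightarrow> 'a) \<Rightarrow> ('a \<Rightarrow> 'a) \<Rightarrow> bool" where
  "koszul_exact S1 S2 S3 \<longleftrightarrow>
     (\<forall>x. S1 x = 0 \<and> S2 x = 0 \<and> S3 x = 0 \<longrightarrow> x = 0)
   \<and> (\<forall>x1 x2 x3. S2 x3 - S3 x2 = 0 \<and> S3 x1 - S1 x3 = 0 \<and> S1 x2 - S2 x1 = 0
        \<longrightarrow> (\<exists>x. x1 = S1 x \<and> x2 = S2 x \<and> x3 = S3 x))
   \<and> (\<forall>y1 y2 y3. S1 y1 + S2 y2 + S3 y3 = 0
        \<longrightarrow> (\<exists>x1 x2 x3. y1 = S2 x3 - S3 x2 \<and> y2 = S3 x1 - S1 x3 \<and> y3 = S1 x2 - S2 x1))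
   \<and> (\<forall>y. \<exists>y1 y2 y3. y = S1 y1 + S2 y2 + S3 y3)"

definition taylor_spectrum ::
  "('a::chilbert \<Rightarrow> 'a) \<Rightarrow> ('a \<Rightarrow> 'a) \<Rightarrow> ('a \<Rightarrow> 'a) \<Rightarrow> (complex \<times> complex \<times> complex) set" where
  "taylor_spectrum T1 T2 T3 = {(l1, l2, l3).
     \<not> koszul_exact (\<lambda>x. T1 x - l1 *\<^sub>C x) (\<lambda>x. T2 x - l2 *\<^sub>C x) (\<lambda>x. T3 x - l3 *\<^sub>C x)}"

definition poly3 :: "(nat \<times> nat \<times> nat) set \<Rightarrow> (nat \<times> nat \<times> nat \<Rightarrow> complex)
    \<Rightarrow> complex \<times> complex \<times> complex \<Rightarrow> complex" where
  "poly3 S c z = (\<Sum>(i,j,k)\<in>S. c (i,j,k) * fst z ^ i * fst (snd z) ^ j * snd (snd z) ^ k)"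

definition opoly3 :: "(nat \<times> nat \<times> nat) set \<Rightarrow> (nat \<times> nat \<times> nat \<Rightarrow> complex)
    \<Rightarrow> ('a::chilbert \<Rightarrow> 'a) \<Rightarrow> ('a \<Rightarrow> 'a) \<Rightarrow> ('a \<Rightarrow> 'a) \<Rightarrow> 'a \<Rightarrow> 'a" where
  "opoly3 S c T1 T2 T3 x = (\<Sum>(i,j,k)\<in>S. c (i,j,k) *\<^sub>C (T1 ^^ i) ((T2 ^^ j) ((T3 ^^ k) x)))"

text \<open>Tetrablock contraction: commuting bounded triple, Taylor spectrum in the closed
  tetrablock, and for every rational f = p/q with q zero-free on the closed tetrablock,
  ||f(A,B,P)|| = ||p(A,B,P) q(A,B,P)^(-1)|| <= sup over the closed tetrablock of |f|.\<close>

definition tetrablock_contraction :: "('a::chilbert \<Rightarrow> 'a) \<Rightarrow> ('a \<Rightarrow> 'a) \<Rightarrow> ('a \<Rightarrow> 'a) \<Rightarrow> bool" where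
  "tetrablock_contraction A B P \<longleftrightarrow>
     bop UNIV A \<and> bop UNIV B \<and> bop UNIV P
   \<and> (\<forall>x. A (B x) = B (A x)) \<and> (\<forall>x. A (P x) = P (A x)) \<and> (\<forall>x. B (P x) = P (B x))
   \<and> taylor_spectrum A B P \<subseteq> tetrablock_closed
   \<and> (\<forall>S p q X. finite S \<longrightarrow> (\<forall>z\<in>tetrablock_closed. poly3 S q z \<noteq> 0)
        \<longrightarrow> bop UNIV X \<longrightarrow> (\<forall>x. X (opoly3 S q A B P x) = x) \<longrightarrow> (\<forall>x. opoly3 S q A B P (X x) = x)
        \<longrightarrow> (\<forall>x. cnorm (opoly3 S p A B P (X x))
               \<le> (SUP z\<in>tetrablock_closed. cmod (poly3 S p z / poly3 S q z)) * cnorm x))"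

definition ell2 :: "'a::chilbert set \<Rightarrow> (nat \<Rightarrow> 'a) set" where
  "ell2 E = {f. (\<forall>n. f n \<in> E) \<and> summable (\<lambda>n. (cnorm (f n))\<^sup>2)}"

text \<open>Toeplitz operator with polynomial symbol phi(z) = sum_k Phis!k z^k, acting on
  sequences: block matrix (Phi_(i-j)).\<close>
definition toeplitz :: "('a::chilbert \<Rightarrow> 'a) list \<Rightarrow> (nat \<Rightarrow> 'a) \<Rightarrow> nat \<Rightarrow> 'a" where
  "toeplitz Phis f n = (\<Sum>k<length Phis. if k \<le> n then (Phis ! k) (f (n - k)) else 0)"

end

theory Submission
  imports Defs
begin


context chilbert begin

lemma scaleC_zero_left[simp]: "0 *\<^sub>C x = 0"
proof -
  have "0 *\<^sub>C x = (0+0) *\<^sub>C x" by simp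
  also have "\<dots> = 0 *\<^sub>C x + 0 *\<^sub>C x" by (rule scaleC_add_left)
  finally show ?thesis by simp
qed

lemma scaleC_zero_right[simp]: "c *\<^sub>C 0 = 0"
proof -
  have "c *\<^sub>C 0 = c *\<^sub>C (0+0)" by simp
  also have "\<dots> = c *\<^sub>C 0 + c *\<^sub>C 0" by (rule scaleC_add_right)
  finally show ?thesis by simp
qed

lemma scaleC_minus_right: "c *\<^sub>C (- x) = - (c *\<^sub>C x)"
proof -
  have "c *\<^sub>C (- x) + c *\<^sub>C x = 0" by (simp flip: scaleC_add_right)
  thus ?thesis by (rule iffD2[OF eq_neg_iff_add_eq_0])
qed

lemma scaleC_minus_left: "(- c) *\<^sub>C x = - (c *\<^sub>C x)"
proof -
  have "(- c) *\<^sub>C x + c *\<^sub>C x = 0" by (simp flip: scaleC_add_left)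
  thus ?thesis by (rule iffD2[OF eq_neg_iff_add_eq_0])
qed

lemma scaleC_diff_right: "c *\<^sub>C (x - y) = c *\<^sub>C x - c *\<^sub>C y"
  using scaleC_add_right[of c x "-y"] scaleC_minus_right[of c y] by simp

lemma scaleC_diff_left: "(c - d) *\<^sub>C x = c *\<^sub>C x - d *\<^sub>C x"
  using scaleC_add_left[of c "-d" x] scaleC_minus_left[of d x] by simp

lemma scaleC_sum_right: "c *\<^sub>C (\<Sum>i\<in>I. f i) = (\<Sum>i\<in>I. c *\<^sub>C f i)"
  by (induction I rule: infinite_finite_induct) (auto simp: scaleC_add_right)

lemma scaleC_sum_left: "(\<Sum>i\<in>I. f i) *\<^sub>C x = (\<Sum>i\<in>I. f i *\<^sub>C x)"
  by (induction I rule: infinite_finite_induct) (auto simp: scaleC_add_left)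

end

lemma cinner_add_left: "cinner (x + y) z = cinner x z + cinner y z"
  by (metis cinner_add_right cinner_commute complex_cnj_add)

lemma cinner_scaleC_left: "cinner (c *\<^sub>C x) y = cnj c * cinner x y"
  by (metis cinner_commute cinner_scaleC_right complex_cnj_mult)

lemma cinner_zero_right[simp]: "cinner x 0 = 0"
  by (metis cinner_scaleC_right mult_zero_left scaleC_zero_left)

lemma cinner_zero_left[simp]: "cinner 0 x = 0"
  by (metis cinner_commute cinner_zero_right complex_cnj_zero)

lemma cinner_minus_right: "cinner x (- y) = - cinner x y"
proof -
  have "cinner x (-y) + cinner x y = 0" using cinner_add_right[of x "-y" y] by simp
  then show ?thesis by (rule iffD2[OF eq_neg_iff_add_eq_0])
qed

lemma cinner_minus_left: "cinner (- x) y = - cinner x y"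
proof -
  have "cinner (-x) y + cinner x y = 0" using cinner_add_left[of "-x" x y] by simp
  then show ?thesis by (rule iffD2[OF eq_neg_iff_add_eq_0])
qed

lemma cinner_diff_right: "cinner x (y - z) = cinner x y - cinner x z"
  using cinner_add_right[of x y "-z"] cinner_minus_right[of x z] by simp

lemma cinner_diff_left: "cinner (x - y) z = cinner x z - cinner y z"
  using cinner_add_left[of x "-y" z] cinner_minus_left[of y z] by simp

lemma cinner_sum_right: "cinner x (\<Sum>i\<in>I. f i) = (\<Sum>i\<in>I. cinner x (f i))"
  by (induction I rule: infinite_finite_induct) (auto simp: cinner_add_right)

lemma cinner_sum_left: "cinner (\<Sum>i\<in>I. f i) x = (\<Sum>i\<in>I. cinner (f i) x)"
  by (induction I rule: infinite_finite_induct) (auto simp: cinner_add_left)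

lemma cinner_self_Im: "Im (cinner x x) = 0"
proof -
  have "Im (cinner x x) = Im (cnj (cinner x x))" using cinner_commute[of x x] by simp
  thus ?thesis by simp
qed

lemma cinner_self_real: "cinner x x = complex_of_real (Re (cinner x x))"
  using cinner_self_Im complex_eq_iff by force



lemma cnorm_nonneg: "0 \<le> cnorm x" using cinner_nonneg[of x] by (simp add: cnorm_def)

lemma cnorm_sq: "(cnorm x)\<^sup>2 = Re (cinner x x)"
  using cinner_nonneg[of x] by (simp add: cnorm_def)

lemma cinner_self_cnorm: "cinner x x = complex_of_real ((cnorm x)\<^sup>2)"
  by (metis cinner_self_real cnorm_sq)

lemma cnorm_zero[simp]: "cnorm 0 = 0" by (simp add: cnorm_def)

lemma cnorm_eq_0[simp]: "cnorm x = 0 \<longleftrightarrow> x = 0"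
  by (metis cinner_eq_zero cinner_self_cnorm cnorm_zero of_real_0 power_zero_numeral)

lemma cnorm_scaleC: "cnorm (c *\<^sub>C x) = cmod c * cnorm x"
proof -
  have "cinner (c *\<^sub>C x) (c *\<^sub>C x) = (c * cnj c) * cinner x x"
    by (simp add: cinner_scaleC_left cinner_scaleC_right)
  also have "\<dots> = complex_of_real ((cmod c)\<^sup>2 * (cnorm x)\<^sup>2)"
    using complex_norm_square[of c] by (simp add: cinner_self_cnorm)
  finally have "(cnorm (c *\<^sub>C x))\<^sup>2 = (cmod c * cnorm x)\<^sup>2"
    by (simp add: cnorm_sq power_mult_distrib)
  thus ?thesis by (rule power2_eq_imp_eq) (simp_all add: cnorm_nonneg)
qed

lemma cnorm_minus: "cnorm (- x) = cnorm x"
  using cnorm_scaleC[of "-1" x] by (simp add: scaleC_minus_left scaleC_one)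

lemma cnorm_minus_commute: "cnorm (x - y) = cnorm (y - x)"
  by (metis cnorm_minus minus_diff_eq)

lemma cs_expand:
  fixes x y :: "'a::chilbert"
  assumes "y \<noteq> 0"
  defines "t \<equiv> cinner y x / cinner y y"
  shows "Re (cinner (x - t *\<^sub>C y) (x - t *\<^sub>C y)) = (cnorm x)\<^sup>2 - (cmod (cinner y x))\<^sup>2 / (cnorm y)\<^sup>2"
proof -
  define r where "r = (cnorm y)\<^sup>2"
  have r: "r > 0" using assms cnorm_nonneg[of y] unfolding r_def
    by (metis cnorm_eq_0 order_le_less zero_less_power)
  have yy: "cinner y y = complex_of_real r" by (simp add: r_def cinner_self_cnorm)
  define a where "a = cinner y x"
  have xy: "cinner x y = cnj a" by (simp add: a_def cinner_commute[of x y])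
  have "cinner (x - t *\<^sub>C y) (x - t *\<^sub>C y) = cinner x x - t * cinner x y - cnj t * cinner y x + cnj t * t * cinner y y"
    by (simp add: cinner_diff_left cinner_diff_right cinner_scaleC_left cinner_scaleC_right algebra_simps)
  also have "\<dots> = cinner x x - a * cnj a / r"
    using r by (simp add: t_def yy xy a_def[symmetric] field_simps)
  finally have e: "cinner (x - t *\<^sub>C y) (x - t *\<^sub>C y) = cinner x x - a * cnj a / complex_of_real r" .
  have "a * cnj a / complex_of_real r = complex_of_real ((cmod a)\<^sup>2 / r)"
    using complex_norm_square[of a] by simp
  with e have "Re (cinner (x - t *\<^sub>C y) (x - t *\<^sub>C y)) = Re (cinner x x) - (cmod a)\<^sup>2 / r"
    by simp
  thus ?thesis by (simp add: cnorm_sq r_def a_def)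
qed

lemma cauchy_schwarz: "cmod (cinner x y) \<le> cnorm x * cnorm y"
proof (cases "y = 0")
  case True thus ?thesis by simp
next
  case False
  have "0 \<le> (cnorm x)\<^sup>2 - (cmod (cinner y x))\<^sup>2 / (cnorm y)\<^sup>2"
    using cs_expand[OF False, of x] cinner_nonneg by metis
  moreover have "cnorm y > 0" using False cnorm_nonneg[of y] by (simp add: order_le_less)
  ultimately have "(cmod (cinner y x))\<^sup>2 \<le> (cnorm x)\<^sup>2 * (cnorm y)\<^sup>2"
    using False pos_divide_le_eq[of "(cnorm y)\<^sup>2" "(cmod (cinner y x))\<^sup>2" "(cnorm x)\<^sup>2"] by simp
  hence "(cmod (cinner y x))\<^sup>2 \<le> (cnorm x * cnorm y)\<^sup>2" by (simp add: power_mult_distrib)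
  hence "cmod (cinner y x) \<le> cnorm x * cnorm y"
    using cnorm_nonneg by (meson mult_nonneg_nonneg power2_le_imp_le)
  thus ?thesis by (metis cinner_commute complex_mod_cnj)
qed

lemma cnorm_add_sq: "(cnorm (x + y))\<^sup>2 = (cnorm x)\<^sup>2 + 2 * Re (cinner x y) + (cnorm y)\<^sup>2"
proof -
  have "Re (cinner y x) = Re (cinner x y)" using cinner_commute[of y x] by simp
  thus ?thesis by (simp add: cnorm_sq cinner_add_left cinner_add_right)
qed

lemma cnorm_triangle: "cnorm (x + y) \<le> cnorm x + cnorm y"
proof -
  have "Re (cinner x y) \<le> cnorm x * cnorm y"
    using cauchy_schwarz[of x y] complex_Re_le_cmod order_trans by blast
  hence "(cnorm (x + y))\<^sup>2 \<le> (cnorm x + cnorm y)\<^sup>2"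
    by (simp add: cnorm_add_sq power2_sum)
  thus ?thesis using cnorm_nonneg by (meson add_nonneg_nonneg power2_le_imp_le)
qed

lemma cnorm_diff_triangle: "cnorm (x - z) \<le> cnorm (x - y) + cnorm (y - z)"
  using cnorm_triangle[of "x - y" "y - z"] by simp

lemma cnorm_sum: "cnorm (\<Sum>i\<in>I. f i) \<le> (\<Sum>i\<in>I. cnorm (f i))"
  by (induction I rule: infinite_finite_induct) (auto intro: order_trans[OF cnorm_triangle])


definition cconv :: "(nat \<Rightarrow> 'a::chilbert) \<Rightarrow> 'a \<Rightarrow> bool" where
  "cconv X L \<longleftrightarrow> (\<lambda>n. cnorm (X n - L)) \<longlonglongrightarrow> 0"

lemma cconv_iff: "cconv X L \<longleftrightarrow> (\<forall>e>0. \<exists>N. \<forall>n\<ge>N. cnorm (X n - L) < e)"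
  unfolding cconv_def LIMSEQ_iff by (simp add: abs_of_nonneg cnorm_nonneg)

lemma cconvI: "(\<And>e. e > 0 \<Longrightarrow> \<exists>N. \<forall>n\<ge>N. cnorm (X n - L) < e) \<Longrightarrow> cconv X L"
  using cconv_iff by blast

lemma cconvD: "cconv X L \<Longrightarrow> e > 0 \<Longrightarrow> \<exists>N. \<forall>n\<ge>N. cnorm (X n - L) < e"
  using cconv_iff by blast

lemma ccomplete:
  fixes X :: "nat \<Rightarrow> 'a::chilbert"
  assumes "\<And>e. e > 0 \<Longrightarrow> \<exists>N. \<forall>m\<ge>N. \<forall>n\<ge>N. cnorm (X m - X n) < e"
  shows "\<exists>L. cconv X L"
proof -
  have "\<exists>L. \<forall>e>0. \<exists>N. \<forall>n\<ge>N. sqrt (Re (cinner (X n - L) (X n - L))) < e"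
    by (rule chilbert_complete) (use assms in \<open>auto simp: cnorm_def\<close>)
  thus ?thesis by (auto simp: cconv_iff cnorm_def)
qed

lemma cconv_unique: assumes "cconv X L" "cconv X M" shows "L = M"
proof (rule ccontr)
  assume "L \<noteq> M"
  hence e: "cnorm (L - M) / 2 > 0" using cnorm_nonneg[of "L - M"] by (simp add: order_le_less)
  obtain N1 where N1: "\<forall>n\<ge>N1. cnorm (X n - L) < cnorm (L - M) / 2" using cconvD[OF assms(1) e] by blast
  obtain N2 where N2: "\<forall>n\<ge>N2. cnorm (X n - M) < cnorm (L - M) / 2" using cconvD[OF assms(2) e] by blast
  let ?n = "max N1 N2"
  have "cnorm (L - M) \<le> cnorm (L - X ?n) + cnorm (X ?n - M)" by (rule cnorm_diff_triangle)
  also have "\<dots> < cnorm (L - M)"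
  proof -
    have a: "cnorm (X ?n - L) < cnorm (L - M) / 2" using N1 by simp
    have b: "cnorm (X ?n - M) < cnorm (L - M) / 2" using N2 by simp
    show ?thesis using a b cnorm_minus_commute[of L "X ?n"] by linarith
  qed
  finally show False by simp
qed

lemma cconv_const: "cconv (\<lambda>n. x) x" by (simp add: cconv_def)

lemma null_cmp:
  fixes f :: "nat \<Rightarrow> 'b::real_normed_vector"
  assumes "\<And>n. norm (f n) \<le> g n" "g \<longlonglongrightarrow> 0" shows "f \<longlonglongrightarrow> 0"
  by (rule Lim_null_comparison[OF always_eventually assms(2)]) (use assms(1) in blast)

lemma cconv_le: assumes "cconv X L" "\<And>n. cnorm (Y n - M) \<le> c * cnorm (X n - L)"
  shows "cconv Y M"
proof -
  have "(\<lambda>n. c * cnorm (X n - L)) \<longlonglongrightarrow> c * 0"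
    using assms(1) unfolding cconv_def by (intro tendsto_mult tendsto_const)
  hence g: "(\<lambda>n. c * cnorm (X n - L)) \<longlonglongrightarrow> 0" by simp
  have "(\<lambda>n. cnorm (Y n - M)) \<longlonglongrightarrow> 0"
  proof (rule Lim_null_comparison[OF _ g])
    show "\<forall>\<^sub>F n in sequentially. norm (cnorm (Y n - M)) \<le> c * cnorm (X n - L)"
      by (rule always_eventually) (simp add: abs_of_nonneg cnorm_nonneg assms(2))
  qed
  thus ?thesis by (simp add: cconv_def)
qed

lemma cconv_add: assumes "cconv X L" "cconv Y M" shows "cconv (\<lambda>n. X n + Y n) (L + M)"
proof -
  have "(\<lambda>n. cnorm (X n - L) + cnorm (Y n - M)) \<longlonglongrightarrow> 0 + 0"
    using assms unfolding cconv_def by (intro tendsto_add)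
  hence g: "(\<lambda>n. cnorm (X n - L) + cnorm (Y n - M)) \<longlonglongrightarrow> 0" by simp
  have b: "norm (cnorm (X n + Y n - (L + M))) \<le> cnorm (X n - L) + cnorm (Y n - M)" for n
    using cnorm_triangle[of "X n - L" "Y n - M"] by (simp add: algebra_simps abs_of_nonneg cnorm_nonneg)
  have "(\<lambda>n. cnorm (X n + Y n - (L + M))) \<longlonglongrightarrow> 0" by (rule null_cmp[OF b g])
  thus ?thesis by (simp add: cconv_def)
qed

lemma cconv_scaleC: assumes "cconv X L" shows "cconv (\<lambda>n. c *\<^sub>C X n) (c *\<^sub>C L)"
  by (rule cconv_le[OF assms, of _ _ "cmod c"]) (simp add: scaleC_diff_right[symmetric] cnorm_scaleC)

lemma cconv_minus: assumes "cconv X L" shows "cconv (\<lambda>n. - X n) (- L)"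
proof (rule cconv_le[OF assms, of _ _ 1])
  fix n
  have "- X n - - L = - (X n - L)" by simp
  thus "cnorm (- X n - - L) \<le> 1 * cnorm (X n - L)" using cnorm_minus_commute[of L "X n"] by simp
qed

lemma cconv_diff: assumes "cconv X L" "cconv Y M" shows "cconv (\<lambda>n. X n - Y n) (L - M)"
  using cconv_add[OF assms(1) cconv_minus[OF assms(2)]] by simp

lemma cconv_inner: assumes "cconv X L" shows "(\<lambda>n. cinner y (X n)) \<longlonglongrightarrow> cinner y L"
proof -
  have "(\<lambda>n. cnorm y * cnorm (X n - L)) \<longlonglongrightarrow> cnorm y * 0"
    using assms unfolding cconv_def by (intro tendsto_mult tendsto_const)
  hence g: "(\<lambda>n. cnorm y * cnorm (X n - L)) \<longlonglongrightarrow> 0" by simp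
  have b: "norm (cinner y (X n) - cinner y L) \<le> cnorm y * cnorm (X n - L)" for n
    using cauchy_schwarz[of y "X n - L"] by (simp add: cinner_diff_right)
  have "(\<lambda>n. cinner y (X n) - cinner y L) \<longlonglongrightarrow> 0" by (rule null_cmp[OF b g])
  thus ?thesis by (rule LIM_zero_cancel)
qed

lemma cconv_inner_left: assumes "cconv X L" shows "(\<lambda>n. cinner (X n) y) \<longlonglongrightarrow> cinner L y"
proof -
  have "(\<lambda>n. cnj (cinner y (X n))) \<longlonglongrightarrow> cnj (cinner y L)"
    using cconv_inner[OF assms] by (rule tendsto_cnj)
  moreover have "(\<lambda>n. cnj (cinner y (X n))) = (\<lambda>n. cinner (X n) y)"
    by (rule ext, rule cinner_commute[symmetric])
  moreover have "cnj (cinner y L) = cinner L y" by (rule cinner_commute[symmetric])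
  ultimately show ?thesis by simp
qed

lemma cconv_norm: assumes "cconv X L" shows "(\<lambda>n. cnorm (X n)) \<longlonglongrightarrow> cnorm L"
proof -
  have b: "norm (cnorm (X n) - cnorm L) \<le> cnorm (X n - L)" for n
    using cnorm_diff_triangle[of "X n" 0 L] cnorm_diff_triangle[of L 0 "X n"] cnorm_minus_commute[of L "X n"]
    by auto
  have g: "(\<lambda>n. cnorm (X n - L)) \<longlonglongrightarrow> 0" using assms unfolding cconv_def .
  have "(\<lambda>n. cnorm (X n) - cnorm L) \<longlonglongrightarrow> 0" by (rule null_cmp[OF b g])
  thus ?thesis by (rule LIM_zero_cancel)
qed

section \<open>Subspaces\<close>

definition csubspace :: "'a::chilbert set \<Rightarrow> bool" where
  "csubspace M \<longleftrightarrow> 0 \<in> M \<and> (\<forall>x\<in>M. \<forall>y\<in>M. x + y \<in> M) \<and> (\<forall>c. \<forall>x\<in>M. c *\<^sub>C x \<in> M)"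

definition cclosed :: "'a::chilbert set \<Rightarrow> bool" where
  "cclosed M \<longleftrightarrow> (\<forall>X L. (\<forall>n. X n \<in> M) \<longrightarrow> cconv X L \<longrightarrow> L \<in> M)"

lemma csubspace_UNIV: "csubspace UNIV" by (simp add: csubspace_def)
lemma cclosed_UNIV: "cclosed UNIV" by (simp add: cclosed_def)

lemma sub0: "csubspace M \<Longrightarrow> 0 \<in> M" by (simp add: csubspace_def)
lemma sub_add: "csubspace M \<Longrightarrow> x \<in> M \<Longrightarrow> y \<in> M \<Longrightarrow> x + y \<in> M" by (simp add: csubspace_def)
lemma sub_scale: "csubspace M \<Longrightarrow> x \<in> M \<Longrightarrow> c *\<^sub>C x \<in> M" by (simp add: csubspace_def)
lemma sub_minus: "csubspace M \<Longrightarrow> x \<in> M \<Longrightarrow> - x \<in> M"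
  using sub_scale[of M x "-1"] by (simp add: scaleC_minus_left scaleC_one)
lemma sub_diff: "csubspace M \<Longrightarrow> x \<in> M \<Longrightarrow> y \<in> M \<Longrightarrow> x - y \<in> M"
  using sub_add[of M x "- y"] sub_minus[of M y] by simp

section \<open>Bounded operators\<close>

lemma bopD_in: "bop M T \<Longrightarrow> x \<in> M \<Longrightarrow> T x \<in> M" by (simp add: bop_def)
lemma bopD_add: "bop M T \<Longrightarrow> x \<in> M \<Longrightarrow> y \<in> M \<Longrightarrow> T (x + y) = T x + T y" by (simp add: bop_def)
lemma bopD_scale: "bop M T \<Longrightarrow> x \<in> M \<Longrightarrow> T (c *\<^sub>C x) = c *\<^sub>C T x" by (simp add: bop_def)
lemma bopD_bound: "bop M T \<Longrightarrow> \<exists>K\<ge>0. \<forall>x\<in>M. cnorm (T x) \<le> K * cnorm x"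
proof -
  assume "bop M T"
  then obtain K where K: "\<forall>x\<in>M. cnorm (T x) \<le> K * cnorm x" by (auto simp: bop_def)
  have "\<forall>x\<in>M. cnorm (T x) \<le> \<bar>K\<bar> * cnorm x"
    using K cnorm_nonneg by (meson abs_ge_self mult_right_mono order_trans)
  thus ?thesis by (intro exI[of _ "\<bar>K\<bar>"]) auto
qed
lemma bop_zero: "bop M T \<Longrightarrow> csubspace M \<Longrightarrow> T 0 = 0"
  using bopD_scale[of M T 0 0] sub0[of M] by simp
lemma bop_minus: "bop M T \<Longrightarrow> csubspace M \<Longrightarrow> x \<in> M \<Longrightarrow> T (- x) = - T x"
  using bopD_scale[of M T x "-1"] by (simp add: scaleC_minus_left scaleC_one)
lemma bop_diff: "bop M T \<Longrightarrow> csubspace M \<Longrightarrow> x \<in> M \<Longrightarrow> y \<in> M \<Longrightarrow> T (x - y) = T x - T y"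
  using bopD_add[of M T x "- y"] bop_minus[of M T y] sub_minus[of M y] by simp

lemma bop_cconv:
  assumes "bop M T" "csubspace M" "\<And>n. X n \<in> M" "L \<in> M" "cconv X L"
  shows "cconv (\<lambda>n. T (X n)) (T L)"
proof -
  obtain K where K: "K \<ge> 0" "\<forall>x\<in>M. cnorm (T x) \<le> K * cnorm x" using bopD_bound[OF assms(1)] by blast
  show ?thesis
  proof (rule cconv_le[OF assms(5), of _ _ K])
    fix n
    have "T (X n) - T L = T (X n - L)" using bop_diff assms by metis
    thus "cnorm (T (X n) - T L) \<le> K * cnorm (X n - L)" using K sub_diff[OF assms(2) assms(3) assms(4)] by simp
  qed
qed

lemma parallelogram: "(cnorm (a + b))\<^sup>2 + (cnorm (a - b))\<^sup>2 = 2 * (cnorm a)\<^sup>2 + 2 * (cnorm b)\<^sup>2"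
proof -
  have "(cnorm (a - b))\<^sup>2 = (cnorm a)\<^sup>2 + 2 * Re (cinner a (-b)) + (cnorm (-b))\<^sup>2"
    using cnorm_add_sq[of a "-b"] by simp
  thus ?thesis by (simp add: cnorm_add_sq cnorm_minus cinner_minus_right)
qed

lemma scaleC_two: "(2::complex) *\<^sub>C x = x + x"
  using scaleC_add_left[of 1 1 x] by (simp add: scaleC_one)

lemma inner_unique:
  assumes "csubspace M" "z1 \<in> M" "z2 \<in> M" "\<And>x. x \<in> M \<Longrightarrow> cinner x z1 = cinner x z2"
  shows "z1 = z2"
proof -
  have "cinner (z1 - z2) (z1 - z2) = 0"
    using assms(4)[OF sub_diff[OF assms(1-3)]] by (simp add: cinner_diff_right)
  thus ?thesis using cinner_eq_zero by fastforce
qed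


lemma projection:
  fixes u :: "'a::chilbert"
  assumes N: "csubspace N" "cclosed N"
  shows "\<exists>p\<in>N. \<forall>q\<in>N. cinner q (u - p) = 0"
proof -
  define S where "S = (\<lambda>q. cnorm (u - q)) ` N"
  define d where "d = Inf S"
  have ne: "S \<noteq> {}" using sub0[OF N(1)] by (auto simp: S_def)
  have bdd: "bdd_below S" unfolding S_def by (rule bdd_belowI[of _ 0]) (auto simp: cnorm_nonneg)
  have lower: "d \<le> cnorm (u - q)" if "q \<in> N" for q
    unfolding d_def by (rule cInf_lower[OF _ bdd]) (use that in \<open>auto simp: S_def\<close>)
  have d0: "0 \<le> d" unfolding d_def by (rule cInf_greatest[OF ne]) (auto simp: S_def cnorm_nonneg)
  have approx: "\<exists>q\<in>N. cnorm (u - q) < d + \<delta>" if "\<delta> > 0" for \<delta>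
  proof -
    have "Inf S < d + \<delta>" using that by (simp add: d_def)
    from cInf_lessD[OF ne this] show ?thesis by (auto simp: S_def)
  qed
  have "\<forall>n. \<exists>x\<in>N. cnorm (u - x) < d + 1 / real (Suc n)" using approx by simp
  then obtain q where q: "\<And>n. q n \<in> N" "\<And>n. cnorm (u - q n) < d + 1 / real (Suc n)" by metis
  have sq: "(cnorm (u - q n))\<^sup>2 \<le> d\<^sup>2 + (2*d+1) / real (Suc n)" for n
  proof -
    define \<delta> where "\<delta> = 1 / real (Suc n)"
    have \<delta>: "0 < \<delta>" "\<delta> \<le> 1" by (auto simp: \<delta>_def)
    have "(cnorm (u - q n))\<^sup>2 \<le> (d + \<delta>)\<^sup>2"
      using q(2)[of n] by (intro power_mono) (auto simp: \<delta>_def cnorm_nonneg)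
    also have "\<dots> = d\<^sup>2 + 2*d*\<delta> + \<delta>*\<delta>" by (simp add: power2_eq_square algebra_simps)
    also have "\<dots> \<le> d\<^sup>2 + 2*d*\<delta> + \<delta>" using \<delta> by (simp add: mult_le_cancel_left1)
    also have "\<dots> = d\<^sup>2 + (2*d+1) / real (Suc n)" by (simp add: \<delta>_def field_simps)
    finally show ?thesis .
  qed
  have par: "(cnorm (q m - q n))\<^sup>2 \<le> 2*(2*d+1)*(1 / real (Suc m) + 1 / real (Suc n))" for m n
  proof -
    define a where "a = u - q m"
    define b where "b = u - q n"
    define mid where "mid = (1/2::complex) *\<^sub>C (q m + q n)"
    have midN: "mid \<in> N" unfolding mid_def using q(1) N(1) by (intro sub_scale sub_add) auto
    have "(2::complex) *\<^sub>C mid = q m + q n"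
      by (simp add: mid_def scaleC_scaleC scaleC_one)
    hence "(2::complex) *\<^sub>C (u - mid) = a + b"
      by (simp add: scaleC_diff_right scaleC_two a_def b_def algebra_simps)
    hence "cnorm (a + b) = 2 * cnorm (u - mid)" by (metis cnorm_scaleC norm_numeral)
    hence "2 * d \<le> cnorm (a + b)" using lower[OF midN] by simp
    hence ab: "4 * d\<^sup>2 \<le> (cnorm (a + b))\<^sup>2"
      using d0 power_mono[of "2*d" "cnorm (a+b)" 2] by (simp add: power_mult_distrib)
    have "cnorm (q m - q n) = cnorm (a - b)" by (simp add: a_def b_def cnorm_minus_commute)
    hence "(cnorm (q m - q n))\<^sup>2 = 2 * (cnorm a)\<^sup>2 + 2 * (cnorm b)\<^sup>2 - (cnorm (a + b))\<^sup>2"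
      using parallelogram[of a b] by simp
    also have "\<dots> \<le> 2 * (d\<^sup>2 + (2*d+1) / real (Suc m)) + 2 * (d\<^sup>2 + (2*d+1) / real (Suc n)) - 4 * d\<^sup>2"
    proof -
      have s1: "(cnorm a)\<^sup>2 \<le> d\<^sup>2 + (2*d+1) / real (Suc m)" using sq[of m] by (simp add: a_def)
      have s2: "(cnorm b)\<^sup>2 \<le> d\<^sup>2 + (2*d+1) / real (Suc n)" using sq[of n] by (simp add: b_def)
      show ?thesis using s1 s2 ab by (smt (verit))
    qed
    also have "\<dots> = 2*(2*d+1)*(1 / real (Suc m) + 1 / real (Suc n))" by (simp add: divide_inverse algebra_simps)
    finally show ?thesis .
  qed
  have cauchy: "\<exists>M. \<forall>m\<ge>M. \<forall>n\<ge>M. cnorm (q m - q n) < e" if e: "e > 0" for e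
  proof -
    obtain M :: nat where M: "4*(2*d+1) / e\<^sup>2 < real M" using reals_Archimedean2 by blast
    have "cnorm (q m - q n) < e" if "m \<ge> M" "n \<ge> M" for m n
    proof -
      have e2: "e\<^sup>2 > 0" using e by simp
      have k: "0 \<le> 2*d+1" using d0 by simp
      have "4*(2*d+1) < real M * e\<^sup>2" using M e2 by (simp add: divide_less_eq)
      hence "4*(2*d+1) < real (Suc m) * e\<^sup>2" "4*(2*d+1) < real (Suc n) * e\<^sup>2"
        using that e2 by (smt (verit) mult_right_mono of_nat_Suc of_nat_mono)+
      hence "(2*d+1) / real (Suc m) < e\<^sup>2 / 4" "(2*d+1) / real (Suc n) < e\<^sup>2 / 4"
        by (simp_all add: divide_less_eq field_simps)
      moreover have "2*(2*d+1)*(1 / real (Suc m) + 1 / real (Suc n)) = 2*((2*d+1) / real (Suc m)) + 2*((2*d+1) / real (Suc n))"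
        by (simp add: divide_inverse algebra_simps)
      ultimately have "2*(2*d+1)*(1 / real (Suc m) + 1 / real (Suc n)) < e\<^sup>2" by linarith
      hence "(cnorm (q m - q n))\<^sup>2 < e\<^sup>2" using par[of m n] by linarith
      thus ?thesis by (rule power2_less_imp_less) (use e in linarith)
    qed
    thus ?thesis by blast
  qed
  obtain p where p: "cconv q p" using ccomplete[OF cauchy] by blast
  have pN: "p \<in> N" using N(2) p q(1) unfolding cclosed_def by blast
  have pd: "cnorm (u - p) \<le> d"
  proof (rule field_le_epsilon)
    fix e :: real assume e: "e > 0"
    obtain N1 where N1: "\<forall>n\<ge>N1. cnorm (q n - p) < e/2" using cconvD[OF p, of "e/2"] e by auto
    obtain N2 :: nat where N2: "2 / e < real N2" using reals_Archimedean2 by blast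
    let ?n = "max N1 N2"
    have "1 / real (Suc ?n) < e / 2"
    proof -
      have "2 / e < real (Suc ?n)" using N2 by (smt (verit) max.cobounded2 of_nat_Suc of_nat_mono)
      thus ?thesis using e by (simp add: divide_less_eq field_simps)
    qed
    hence "cnorm (u - q ?n) < d + e/2" using q(2)[of ?n] by linarith
    moreover have "cnorm (q ?n - p) < e/2" using N1 by simp
    ultimately show "cnorm (u - p) \<le> d + e"
      using cnorm_diff_triangle[of u p "q ?n"] by linarith
  qed
  have orth: "cinner y (u - p) = 0" if yN: "y \<in> N" for y
  proof (cases "y = 0")
    case True thus ?thesis by simp
  next
    case False
    define w where "w = u - p"
    define t where "t = cinner y w / cinner y y"
    have "p + t *\<^sub>C y \<in> N" using pN yN N(1) by (intro sub_add sub_scale)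
    hence "cnorm w \<le> cnorm (u - (p + t *\<^sub>C y))" using pd lower unfolding w_def by force
    also have "u - (p + t *\<^sub>C y) = w - t *\<^sub>C y" by (simp add: w_def)
    finally have "(cnorm w)\<^sup>2 \<le> (cnorm (w - t *\<^sub>C y))\<^sup>2" by (rule power_mono) (simp add: cnorm_nonneg)
    also have "\<dots> = (cnorm w)\<^sup>2 - (cmod (cinner y w))\<^sup>2 / (cnorm y)\<^sup>2"
      using cs_expand[OF False, of w] by (simp add: cnorm_sq t_def)
    finally have "(cmod (cinner y w))\<^sup>2 / (cnorm y)\<^sup>2 \<le> 0" by simp
    moreover have "(cnorm y)\<^sup>2 > 0" using False cnorm_nonneg[of y] by (simp add: order_le_less)
    ultimately have "(cmod (cinner y w))\<^sup>2 \<le> 0" by (simp add: divide_le_0_iff)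
    thus ?thesis by (simp add: w_def)
  qed
  show ?thesis using pN orth by blast
qed

lemma riesz:
  fixes \<psi> :: "'a::chilbert \<Rightarrow> complex"
  assumes M: "csubspace M" "cclosed M"
    and lin: "\<And>x y. x \<in> M \<Longrightarrow> y \<in> M \<Longrightarrow> \<psi> (x + y) = \<psi> x + \<psi> y"
             "\<And>c x. x \<in> M \<Longrightarrow> \<psi> (c *\<^sub>C x) = c * \<psi> x"
    and bnd: "\<And>x. x \<in> M \<Longrightarrow> cmod (\<psi> x) \<le> K * cnorm x"
  shows "\<exists>z\<in>M. \<forall>x\<in>M. \<psi> x = cinner z x"
proof (cases "\<forall>x\<in>M. \<psi> x = 0")
  case True thus ?thesis using sub0[OF M(1)] by (intro bexI[of _ 0]) auto
next
  case False
  then obtain u where u: "u \<in> M" "\<psi> u \<noteq> 0" by blast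
  have psi0: "\<psi> 0 = 0" using lin(2)[of 0 0] sub0[OF M(1)] by simp
  have psidiff: "\<psi> (x - y) = \<psi> x - \<psi> y" if "x \<in> M" "y \<in> M" for x y
  proof -
    have "\<psi> (x - y) + \<psi> y = \<psi> x" using lin(1)[OF sub_diff[OF M(1) that] that(2)] by simp
    thus ?thesis by (simp add: eq_diff_eq)
  qed
  define N where "N = {x\<in>M. \<psi> x = 0}"
  have Nsub: "csubspace N" unfolding N_def csubspace_def
    using M(1) lin psi0 by (auto simp: sub0 sub_add sub_scale)
  have Ncl: "cclosed N" unfolding cclosed_def
  proof (intro allI impI)
    fix X L assume X: "\<forall>n. X n \<in> N" and c: "cconv X L"
    have LM: "L \<in> M" using X c M(2) unfolding cclosed_def N_def by blast
    have "cmod (\<psi> L) \<le> K * cnorm (X n - L)" for n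
    proof -
      have "\<psi> L = - \<psi> (X n - L)" using X psidiff[of "X n" L] LM by (simp add: N_def)
      thus ?thesis using bnd[OF sub_diff[OF M(1), of "X n" L]] X LM by (simp add: N_def)
    qed
    hence "cmod (\<psi> L) \<le> 0"
    proof -
      assume h: "\<And>n. cmod (\<psi> L) \<le> K * cnorm (X n - L)"
      have "(\<lambda>n. K * cnorm (X n - L)) \<longlonglongrightarrow> K * 0" using c unfolding cconv_def by (intro tendsto_mult tendsto_const)
      hence "cmod (\<psi> L) \<le> K * 0" by (rule LIMSEQ_le_const) (use h in auto)
      thus ?thesis by simp
    qed
    thus "L \<in> N" using LM by (simp add: N_def)
  qed
  obtain p where p: "p \<in> N" "\<And>q. q \<in> N \<Longrightarrow> cinner q (u - p) = 0"
    using projection[OF Nsub Ncl, of u] by blast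
  define w where "w = u - p"
  have pM: "p \<in> M" "\<psi> p = 0" using p(1) by (auto simp: N_def)
  have wM: "w \<in> M" using sub_diff[OF M(1) u(1) pM(1)] by (simp add: w_def)
  have pw: "\<psi> w = \<psi> u" using psidiff[OF u(1) pM(1)] pM(2) by (simp add: w_def)
  hence pw0: "\<psi> w \<noteq> 0" using u by simp
  hence w0: "w \<noteq> 0" using psi0 by auto
  have ww: "cinner w w \<noteq> 0" using w0 cinner_eq_zero by blast
  have wwr: "cnj (cinner w w) = cinner w w" by (metis cinner_commute)
  define z where "z = (cnj (\<psi> w) / cinner w w) *\<^sub>C w"
  have zM: "z \<in> M" using wM M(1) by (simp add: z_def sub_scale)
  have "\<psi> x = cinner z x" if xM: "x \<in> M" for x
  proof -
    define v where "v = x - (\<psi> x / \<psi> w) *\<^sub>C w"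
    have vM: "v \<in> M" unfolding v_def using xM wM M(1) by (intro sub_diff sub_scale)
    have "\<psi> v = \<psi> x - (\<psi> x / \<psi> w) * \<psi> w"
      unfolding v_def using psidiff[OF xM sub_scale[OF M(1) wM]] lin(2)[OF wM] by simp
    hence "\<psi> v = 0" using pw0 by simp
    hence "v \<in> N" using vM by (simp add: N_def)
    hence "cinner v w = 0" using p(2) by (simp add: w_def)
    hence "cinner x w = cnj (\<psi> x / \<psi> w) * cinner w w"
      by (simp add: v_def cinner_diff_left cinner_scaleC_left)
    hence "cinner w x = (\<psi> x / \<psi> w) * cinner w w"
      by (metis cinner_commute complex_cnj_cnj complex_cnj_mult wwr)
    thus ?thesis using ww pw0
      by (simp add: z_def cinner_scaleC_left wwr)
  qed
  thus ?thesis using zM by blast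
qed

lemma adjoint_exists:
  fixes F :: "'a::chilbert \<Rightarrow> 'a"
  assumes M: "csubspace M" "cclosed M" and F: "bop M F"
  shows "\<exists>G. bop M G \<and> (\<forall>x\<in>M. \<forall>y\<in>M. cinner (F x) y = cinner x (G y))"
proof -
  obtain K where K: "K \<ge> 0" "\<And>x. x \<in> M \<Longrightarrow> cnorm (F x) \<le> K * cnorm x" using bopD_bound[OF F] by blast
  have ex: "\<exists>z\<in>M. \<forall>x\<in>M. cinner (F x) y = cinner x z" if yM: "y \<in> M" for y
  proof -
    have "\<exists>z\<in>M. \<forall>x\<in>M. cinner y (F x) = cinner z x"
    proof (rule riesz[OF M, where K = "cnorm y * K"])
      show "cinner y (F (x + x')) = cinner y (F x) + cinner y (F x')" if "x \<in> M" "x' \<in> M" for x x'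
        using bopD_add[OF F that] by (simp add: cinner_add_right)
      show "cinner y (F (c *\<^sub>C x)) = c * cinner y (F x)" if "x \<in> M" for c x
        using bopD_scale[OF F that] by (simp add: cinner_scaleC_right)
      show "cmod (cinner y (F x)) \<le> cnorm y * K * cnorm x" if "x \<in> M" for x
        using cauchy_schwarz[of y "F x"] K(2)[OF that] cnorm_nonneg[of y]
        by (smt (verit, best) mult.assoc mult_left_mono)
    qed
    then obtain z where z: "z \<in> M" "\<forall>x\<in>M. cinner y (F x) = cinner z x" by blast
    have "cinner (F x) y = cinner x z" if "x \<in> M" for x
      using z(2) that by (metis cinner_commute)
    thus ?thesis using z(1) by blast
  qed
  have "\<forall>y\<in>M. \<exists>z. z \<in> M \<and> (\<forall>x\<in>M. cinner (F x) y = cinner x z)"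
  proof
    fix y assume "y \<in> M"
    from ex[OF this] show "\<exists>z. z \<in> M \<and> (\<forall>x\<in>M. cinner (F x) y = cinner x z)" by (simp only: Bex_def)
  qed
  hence "\<exists>G. \<forall>y\<in>M. G y \<in> M \<and> (\<forall>x\<in>M. cinner (F x) y = cinner x (G y))" by (rule bchoice)
  then obtain G where G0: "\<forall>y\<in>M. G y \<in> M \<and> (\<forall>x\<in>M. cinner (F x) y = cinner x (G y))" ..
  have G: "G y \<in> M" "\<forall>x\<in>M. cinner (F x) y = cinner x (G y)" if "y \<in> M" for y
    using G0 that by auto
  have Gadd: "G (y + y') = G y + G y'" if "y \<in> M" "y' \<in> M" for y y'
  proof (rule inner_unique[OF M(1)])
    show "G (y + y') \<in> M" using G(1) sub_add[OF M(1) that] by blast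
    show "G y + G y' \<in> M" using G(1) that M(1) by (simp add: sub_add)
    fix x assume xM: "x \<in> M"
    have "cinner x (G (y + y')) = cinner (F x) (y + y')" using G(2)[OF sub_add[OF M(1) that]] xM by simp
    also have "\<dots> = cinner (F x) y + cinner (F x) y'" by (simp add: cinner_add_right)
    also have "\<dots> = cinner x (G y) + cinner x (G y')" using G(2)[OF that(1)] G(2)[OF that(2)] xM by simp
    finally show "cinner x (G (y + y')) = cinner x (G y + G y')" by (simp add: cinner_add_right)
  qed
  have Gscale: "G (c *\<^sub>C y) = c *\<^sub>C G y" if "y \<in> M" for c y
  proof (rule inner_unique[OF M(1)])
    show "G (c *\<^sub>C y) \<in> M" using G(1) sub_scale[OF M(1) that] by blast
    show "c *\<^sub>C G y \<in> M" using G(1) that M(1) by (simp add: sub_scale)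
    fix x assume xM: "x \<in> M"
    have "cinner x (G (c *\<^sub>C y)) = cinner (F x) (c *\<^sub>C y)" using G(2)[OF sub_scale[OF M(1) that]] xM by simp
    also have "\<dots> = c * cinner (F x) y" by (simp add: cinner_scaleC_right)
    also have "\<dots> = c * cinner x (G y)" using G(2)[OF that] xM by simp
    finally show "cinner x (G (c *\<^sub>C y)) = cinner x (c *\<^sub>C G y)" by (simp add: cinner_scaleC_right)
  qed
  have Gbnd: "cnorm (G y) \<le> K * cnorm y" if yM: "y \<in> M" for y
  proof -
    have "(cnorm (G y))\<^sup>2 = Re (cinner (G y) (G y))" by (simp add: cnorm_sq)
    also have "cinner (G y) (G y) = cinner (F (G y)) y" using G[OF yM] by simp
    also have "Re (cinner (F (G y)) y) \<le> cnorm (F (G y)) * cnorm y"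
      using cauchy_schwarz[of "F (G y)" y] complex_Re_le_cmod order_trans by blast
    also have "\<dots> \<le> K * cnorm (G y) * cnorm y"
      by (rule mult_right_mono[OF K(2)[OF G(1)[OF yM]] cnorm_nonneg])
    finally have h: "cnorm (G y) * cnorm (G y) \<le> (K * cnorm y) * cnorm (G y)"
      by (simp add: power2_eq_square algebra_simps)
    show ?thesis
    proof (cases "cnorm (G y) = 0")
      case True thus ?thesis using K(1) cnorm_nonneg[of y] by simp
    next
      case False
      hence "cnorm (G y) > 0" using cnorm_nonneg[of "G y"] by (simp add: order_le_less)
      thus ?thesis using h by simp
    qed
  qed
  have "bop M G" unfolding bop_def using G(1) Gadd Gscale Gbnd by blast
  thus ?thesis using G(2) by blast
qed

lemma adj_props:
  assumes M: "csubspace M" "cclosed M" and F: "bop M F"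
  shows "bop M (adj M F)" "\<And>x y. x \<in> M \<Longrightarrow> y \<in> M \<Longrightarrow> cinner (F x) y = cinner x (adj M F y)"
proof -
  have "bop M (adj M F) \<and> (\<forall>x\<in>M. \<forall>y\<in>M. cinner (F x) y = cinner x (adj M F y))"
    unfolding adj_def by (rule someI_ex[OF adjoint_exists[OF M F]])
  thus "bop M (adj M F)" "\<And>x y. x \<in> M \<Longrightarrow> y \<in> M \<Longrightarrow> cinner (F x) y = cinner x (adj M F y)" by auto
qed

lemma adj_unique:
  assumes M: "csubspace M" "cclosed M" and F: "bop M F"
    and G: "\<And>y. y \<in> M \<Longrightarrow> G y \<in> M" "\<And>x y. x \<in> M \<Longrightarrow> y \<in> M \<Longrightarrow> cinner (F x) y = cinner x (G y)"
    and y: "y \<in> M"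
  shows "adj M F y = G y"
  by (rule inner_unique[OF M(1)]) (use adj_props[OF M F] G y bopD_in in auto)

lemma adj_left:
  assumes M: "csubspace M" "cclosed M" and F: "bop M F" and "x \<in> M" "y \<in> M"
  shows "cinner (adj M F x) y = cinner x (F y)"
  using adj_props(2)[OF M F assms(5,4)] by (metis cinner_commute)


definition sqc :: "nat \<Rightarrow> real" where "sqc n = (-1)^n * ((1/2::real) gchoose n)"

lemma sqc_0[simp]: "sqc 0 = 1" by (simp add: sqc_def)

lemma sqc_rec: "sqc (Suc n) = sqc n * (real n - 1/2) / real (Suc n)"
proof -
  define g where "g = ((1/2::real) gchoose n)"
  define g1 where "g1 = ((1/2::real) gchoose (Suc n))"
  have "(1/2::real) * g = real n * g + real (Suc n) * g1"
    unfolding g_def g1_def by (rule gbinomial_mult_1)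
  hence h: "real (Suc n) * g1 = (1/2 - real n) * g" by (simp add: left_diff_distrib)
  hence h2: "g1 = (1/2 - real n) * g / real (Suc n)" by (simp add: eq_divide_eq mult.commute del: of_nat_Suc)
  have "sqc (Suc n) = - ((-1)^n * g1)" by (simp add: sqc_def g1_def)
  also have "\<dots> = (-1)^n * g * (real n - 1/2) / real (Suc n)" by (simp add: h2 field_simps del: of_nat_Suc)
  also have "\<dots> = sqc n * (real n - 1/2) / real (Suc n)" by (simp add: sqc_def g_def)
  finally show ?thesis .
qed

lemma sqc_conv: "(\<Sum>i\<le>k. sqc i * sqc (k - i)) = (if k = 0 then 1 else if k = 1 then -1 else 0)"
proof -
  have "fps_binomial (1/2::real) * fps_binomial (1/2) = fps_binomial 1"
    by (simp flip: fps_binomial_add_mult)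
  hence "fps_nth (fps_binomial (1/2::real) * fps_binomial (1/2)) k = fps_nth (1 + fps_X) k"
    by (simp add: fps_binomial_1)
  hence e: "(\<Sum>i=0..k. ((1/2::real) gchoose i) * ((1/2) gchoose (k - i))) = (if k = 0 then 1 else if k = 1 then 1 else 0)"
    by (simp add: fps_mult_nth fps_X_def)
  have "(\<Sum>i\<le>k. sqc i * sqc (k - i)) = (-1)^k * (\<Sum>i=0..k. ((1/2::real) gchoose i) * ((1/2) gchoose (k - i)))"
    unfolding sum_distrib_left atLeast0AtMost
  proof (rule sum.cong)
    fix i assume "i \<in> {..k}"
    hence "(-1::real)^k = (-1)^i * (-1)^(k-i)" by (simp flip: power_add)
    thus "sqc i * sqc (k - i) = (-1)^k * (((1/2::real) gchoose i) * ((1/2) gchoose (k - i)))"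
      by (simp add: sqc_def)
  qed simp
  also have "\<dots> = (if k = 0 then 1 else if k = 1 then -1 else 0)" using e by simp
  finally show ?thesis .
qed

definition psa :: "nat \<Rightarrow> real" where "psa N = (\<Sum>n\<le>N. sqc n)"

lemma aux_frac: "(a::real) \<noteq> 0 \<Longrightarrow> b \<noteq> 0 \<Longrightarrow> (1 / a) * (a / b)\<^sup>2 = a / b\<^sup>2"
  by (simp add: power2_eq_square field_simps)

lemma psa_key: "psa N \<ge> 0 \<and> sqc (Suc N) = - psa N / (2 * real N + 2) \<and> (psa N)\<^sup>2 \<le> 1 / (2 * real N + 1)"
proof (induction N)
  case 0
  have "sqc 1 = -1/2" using sqc_rec[of 0] by simp
  thus ?case by (simp add: psa_def)
next
  case (Suc N)
  have p0: "psa N \<ge> 0" and s: "sqc (Suc N) = - psa N / (2 * real N + 2)"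
    and q: "(psa N)\<^sup>2 \<le> 1 / (2 * real N + 1)" using Suc by auto
  have ps: "psa (Suc N) = psa N * (2 * real N + 1) / (2 * real N + 2)"
    by (simp add: psa_def s field_simps)
  have A: "psa (Suc N) \<ge> 0" using p0 by (simp add: ps)
  have B: "sqc (Suc (Suc N)) = - psa (Suc N) / (2 * real (Suc N) + 2)"
    by (simp add: sqc_rec[of "Suc N"] s ps field_simps)
  have "(psa (Suc N))\<^sup>2 = (psa N)\<^sup>2 * ((2 * real N + 1) / (2 * real N + 2))\<^sup>2"
    by (simp add: ps power_mult_distrib power_divide)
  also have "\<dots> \<le> (1 / (2 * real N + 1)) * ((2 * real N + 1) / (2 * real N + 2))\<^sup>2"
    by (rule mult_right_mono[OF q]) simp
  also have "\<dots> = (2 * real N + 1) / (2 * real N + 2)\<^sup>2"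
    by (rule aux_frac) simp_all
  also have "\<dots> \<le> 1 / (2 * real (Suc N) + 1)"
  proof -
    have "(2 * real N + 1) * (2 * real N + 3) \<le> (2 * real N + 2)\<^sup>2" by (simp add: power2_eq_square algebra_simps)
    thus ?thesis by (simp add: field_simps)
  qed
  finally show ?case using A B by simp
qed

lemma psa_nonneg: "psa N \<ge> 0" using psa_key by blast

lemma sqc_nonpos: "n \<ge> 1 \<Longrightarrow> sqc n \<le> 0"
proof -
  assume "n \<ge> 1"
  then obtain N where "n = Suc N" by (cases n) auto
  thus ?thesis using psa_key[of N] psa_nonneg[of N] by (simp add: divide_nonneg_pos)
qed

lemma psa_tendsto: "psa \<longlonglongrightarrow> 0"
proof -
  have b: "norm ((psa N)\<^sup>2) \<le> inverse (real (Suc N))" for N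
  proof -
    have "(psa N)\<^sup>2 \<le> 1 / (2 * real N + 1)" using psa_key by blast
    also have "\<dots> \<le> inverse (real (Suc N))" by (simp add: field_simps)
    finally show ?thesis by simp
  qed
  have "(\<lambda>N. (psa N)\<^sup>2) \<longlonglongrightarrow> 0" by (rule null_cmp[OF b LIMSEQ_inverse_real_of_nat])
  hence "(\<lambda>N. sqrt ((psa N)\<^sup>2)) \<longlonglongrightarrow> sqrt 0" by (rule tendsto_real_sqrt)
  thus ?thesis using psa_nonneg by simp
qed

lemma abs_sqc_sum: "(\<Sum>n\<le>N. \<bar>sqc n\<bar>) = 2 - psa N"
proof (induction N)
  case 0 thus ?case by (simp add: psa_def)
next
  case (Suc N)
  have "\<bar>sqc (Suc N)\<bar> = - sqc (Suc N)" using sqc_nonpos[of "Suc N"] by simp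
  thus ?case using Suc by (simp add: psa_def)
qed

lemma abs_sqc_sum_lt: "(\<Sum>n<N. \<bar>sqc n\<bar>) \<le> 2"
proof (cases N)
  case 0 thus ?thesis by simp
next
  case (Suc M)
  have "(\<Sum>n<N. \<bar>sqc n\<bar>) = (\<Sum>n\<le>M. \<bar>sqc n\<bar>)" using Suc by (simp add: lessThan_Suc_atMost)
  thus ?thesis using abs_sqc_sum[of M] psa_nonneg[of M] by simp
qed

lemma summable_abs_sqc: "summable (\<lambda>n. \<bar>sqc n\<bar>)"
  by (rule summableI_nonneg_bounded[where x=2]) (simp_all add: abs_sqc_sum_lt)

lemma sum_sqc_lt: "N \<ge> 1 \<Longrightarrow> (\<Sum>n<N. sqc n) = psa (N - 1)"
  by (cases N) (simp_all add: psa_def lessThan_Suc_atMost)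


lemma bop_sum: "bop UNIV T \<Longrightarrow> T (\<Sum>i\<in>A. f i) = (\<Sum>i\<in>A. T (f i))"
  by (induction A rule: infinite_finite_induct)
     (auto simp: bop_zero[OF _ csubspace_UNIV] bopD_add)

lemma cconv_le2:
  assumes "cconv X1 L1" "cconv X2 L2" "\<And>n. cnorm (Y n - M) \<le> a * cnorm (X1 n - L1) + cnorm (X2 n - L2)"
  shows "cconv Y M"
proof -
  have "(\<lambda>n. a * cnorm (X1 n - L1) + cnorm (X2 n - L2)) \<longlonglongrightarrow> a * 0 + 0"
    using assms(1,2) unfolding cconv_def by (intro tendsto_add tendsto_mult tendsto_const)
  hence g: "(\<lambda>n. a * cnorm (X1 n - L1) + cnorm (X2 n - L2)) \<longlonglongrightarrow> 0" by simp
  have b: "norm (cnorm (Y n - M)) \<le> a * cnorm (X1 n - L1) + cnorm (X2 n - L2)" for n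
    using assms(3)[of n] by (simp add: abs_of_nonneg cnorm_nonneg)
  have "(\<lambda>n. cnorm (Y n - M)) \<longlonglongrightarrow> 0" by (rule null_cmp[OF b g])
  thus ?thesis by (simp add: cconv_def)
qed

lemma cconv_eventually:
  assumes "\<And>n. n \<ge> Nst \<Longrightarrow> cnorm (Y n - M) \<le> g n" "g \<longlonglongrightarrow> 0"
  shows "cconv Y M"
proof -
  have "(\<lambda>n. cnorm (Y n - M)) \<longlonglongrightarrow> 0"
  proof (rule Lim_null_comparison[OF _ assms(2)])
    show "\<forall>\<^sub>F n in sequentially. norm (cnorm (Y n - M)) \<le> g n"
      unfolding eventually_sequentially using assms(1) by (auto simp: abs_of_nonneg cnorm_nonneg)
  qed
  thus ?thesis by (simp add: cconv_def)
qed

lemma dsplit: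
  fixes g :: "nat \<Rightarrow> nat \<Rightarrow> 'b::comm_monoid_add"
  shows "(\<Sum>m<N. \<Sum>n<N. g m n) = (\<Sum>k<N. \<Sum>i\<le>k. g i (k - i))
           + (\<Sum>(m,n)\<in>{(m,n). m < N \<and> n < N \<and> N \<le> m + n}. g m n)"
proof -
  have "(\<Sum>m<N. \<Sum>n<N. g m n) = (\<Sum>(m,n)\<in>{..<N} \<times> {..<N}. g m n)"
    by (rule sum.cartesian_product)
  also have "{..<N} \<times> {..<N} = {(i,j). i + j < N} \<union> {(m,n). m < N \<and> n < N \<and> N \<le> m + n}"
    by auto
  also have "(\<Sum>(m,n)\<in>{(i,j). i + j < N} \<union> {(m,n). m < N \<and> n < N \<and> N \<le> m + n}. g m n)
      = (\<Sum>(m,n)\<in>{(i,j). i + j < N}. g m n) + (\<Sum>(m,n)\<in>{(m,n). m < N \<and> n < N \<and> N \<le> m + n}. g m n)"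
  proof (rule sum.union_disjoint)
    show "finite {(i, j). i + j < N}"
      by (rule finite_subset[of _ "{..<N} \<times> {..<N}"]) auto
    show "finite {(m, n). m < N \<and> n < N \<and> N \<le> m + n}"
      by (rule finite_subset[of _ "{..<N} \<times> {..<N}"]) auto
  qed auto
  also have "(\<Sum>(m,n)\<in>{(i,j). i + j < N}. g m n) = (\<Sum>k<N. \<Sum>i\<le>k. g i (k - i))"
    by (rule sum.triangle_reindex)
  finally show ?thesis .
qed

definition cv :: "nat \<Rightarrow> real" where "cv k = (if k = 0 then 1 else if k = 1 then -1 else 0)"

lemma cv_sum_vec: "N \<ge> 2 \<Longrightarrow> (\<Sum>k<N. complex_of_real (cv k) *\<^sub>C (v k :: 'a::chilbert)) = v 0 - v 1"
proof (induction N rule: nat_induct_at_least)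
  case base
  have "{..<2::nat} = {0, 1}" by auto
  thus ?case by (simp add: cv_def scaleC_one scaleC_minus_left)
next
  case (Suc n) thus ?case by (simp add: cv_def)
qed

lemma cv_sum_real: "N \<ge> 2 \<Longrightarrow> (\<Sum>k<N. cv k) = 0"
proof (induction N rule: nat_induct_at_least)
  case base
  have "{..<2::nat} = {0, 1}" by auto
  thus ?case by (simp add: cv_def)
next
  case (Suc n) thus ?case by (simp add: cv_def)
qed

lemma sqc_conv_cv: "(\<Sum>i\<le>k. sqc i * sqc (k - i)) = cv k"
  by (simp add: sqc_conv cv_def)

lemma posop_zero:
  fixes A :: "'a::chilbert \<Rightarrow> 'a"
  assumes A: "posop A" and y: "Re (cinner y (A y)) = 0"
  shows "A y = 0"
proof -
  have Ab: "bop UNIV A" and As: "\<And>x y. cinner (A x) y = cinner x (A y)"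
    and Ap: "\<And>x. 0 \<le> Re (cinner x (A x))" using A by (auto simp: posop_def)
  define z where "z = A y"
  define \<alpha> where "\<alpha> = (cnorm z)\<^sup>2"
  define \<beta> where "\<beta> = Re (cinner z (A z))"
  have key: "0 \<le> 2 * s * \<alpha> + s\<^sup>2 * \<beta>" for s :: real
  proof -
    define v where "v = y + complex_of_real s *\<^sub>C z"
    have Av: "A v = A y + complex_of_real s *\<^sub>C A z"
      unfolding v_def using Ab by (simp add: bopD_add bopD_scale)
    have yz: "cinner y (A z) = cinner z z" using As[of y z] by (simp add: z_def)
    have "cinner v (A v) = cinner y (A y) + complex_of_real s * cinner y (A z)
         + complex_of_real s * cinner z (A y) + complex_of_real s * complex_of_real s * cinner z (A z)"
      unfolding Av by (simp add: v_def cinner_add_left cinner_add_right cinner_scaleC_left cinner_scaleC_right algebra_simps)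
    also have "\<dots> = cinner y (A y) + 2 * complex_of_real s * cinner z z + complex_of_real (s\<^sup>2) * cinner z (A z)"
      by (simp add: yz z_def[symmetric] power2_eq_square algebra_simps)
    finally have "Re (cinner v (A v)) = Re (cinner y (A y)) + 2 * s * \<alpha> + s\<^sup>2 * \<beta>"
      by (simp add: \<alpha>_def \<beta>_def cinner_self_cnorm)
    thus ?thesis using Ap[of v] y by simp
  qed
  have a0: "\<alpha> \<ge> 0" by (simp add: \<alpha>_def)
  have "\<alpha> \<le> 0"
  proof (cases "\<beta> \<le> 0")
    case True
    have "0 \<le> 2 * (-1) * \<alpha> + (-1)\<^sup>2 * \<beta>" by (rule key)
    thus ?thesis using True by simp
  next
    case False
    have "0 \<le> 2 * (- \<alpha> / \<beta>) * \<alpha> + (- \<alpha> / \<beta>)\<^sup>2 * \<beta>" by (rule key)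
    also have "\<dots> = - (\<alpha>\<^sup>2 / \<beta>)" using False by (simp add: power2_eq_square field_simps)
    finally have "\<alpha>\<^sup>2 / \<beta> \<le> 0" by simp
    hence "\<alpha>\<^sup>2 \<le> 0" using False by (simp add: divide_le_0_iff)
    thus ?thesis by simp
  qed
  hence "cnorm z = 0" using a0 by (simp add: \<alpha>_def)
  thus ?thesis by (simp add: z_def)
qed

locale qop =
  fixes Q :: "'a::chilbert \<Rightarrow> 'a"
  assumes Qbop: "bop UNIV Q"
    and Qsym: "\<And>x y. cinner (Q x) y = cinner x (Q y)"
    and Qnorm: "\<And>x. cnorm (Q x) \<le> cnorm x"
begin

lemma Qn_norm: "cnorm ((Q ^^ n) x) \<le> cnorm x"
proof (induction n arbitrary: x)
  case (Suc m)
  have "cnorm (Q ((Q ^^ m) x)) \<le> cnorm x" by (rule order_trans[OF Qnorm Suc.IH])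
  thus ?case by simp
qed simp

lemma Qn_bop: "bop UNIV (Q ^^ n)"
proof (induction n)
  case 0 thus ?case by (auto simp: bop_def intro!: exI[of _ 1])
next
  case (Suc n)
  have "cnorm ((Q ^^ Suc n) x) \<le> 1 * cnorm x" for x using Qn_norm[of "Suc n" x] by simp
  hence "\<exists>K. \<forall>x. cnorm ((Q ^^ Suc n) x) \<le> K * cnorm x" by blast
  thus ?case using Suc Qbop unfolding bop_def by simp
qed

lemma Qn_add: "(Q ^^ n) (x + y) = (Q ^^ n) x + (Q ^^ n) y"
  using bopD_add[OF Qn_bop] by simp

lemma Qn_scale: "(Q ^^ n) (c *\<^sub>C x) = c *\<^sub>C (Q ^^ n) x"
  using bopD_scale[OF Qn_bop] by simp

lemma Qn_sum: "(Q ^^ n) (\<Sum>i\<in>A. f i) = (\<Sum>i\<in>A. (Q ^^ n) (f i))"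
  by (rule bop_sum[OF Qn_bop])

lemma Qn_sym: "cinner ((Q ^^ n) x) y = cinner x ((Q ^^ n) y)"
proof (induction n arbitrary: x y)
  case (Suc n)
  have "cinner ((Q ^^ Suc n) x) y = cinner ((Q ^^ n) x) (Q y)" by (simp add: Qsym)
  also have "\<dots> = cinner x ((Q ^^ n) (Q y))" by (rule Suc)
  also have "(Q ^^ n) (Q y) = (Q ^^ Suc n) y" by (simp add: funpow_swap1)
  finally show ?case .
qed simp

lemma Qn_comm:
  assumes T: "bop UNIV T" "\<And>x. T (Q x) = Q (T x)"
  shows "T ((Q ^^ n) x) = (Q ^^ n) (T x)"
  by (induction n) (simp_all add: T(2))

definition S :: "nat \<Rightarrow> 'a \<Rightarrow> 'a" where
  "S N x = (\<Sum>n<N. complex_of_real (sqc n) *\<^sub>C (Q ^^ n) x)"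

lemma S_add: "S N (x + y) = S N x + S N y"
  by (simp add: S_def Qn_add scaleC_add_right sum.distrib)

lemma S_scale: "S N (c *\<^sub>C x) = c *\<^sub>C S N x"
  by (simp add: S_def Qn_scale scaleC_sum_right scaleC_scaleC mult.commute)

lemma S_norm: "cnorm (S N x) \<le> 2 * cnorm x"
proof -
  have "cnorm (S N x) \<le> (\<Sum>n<N. cnorm (complex_of_real (sqc n) *\<^sub>C (Q ^^ n) x))"
    unfolding S_def by (rule cnorm_sum)
  also have "\<dots> \<le> (\<Sum>n<N. \<bar>sqc n\<bar> * cnorm x)"
    by (rule sum_mono) (simp add: cnorm_scaleC Qn_norm mult_left_mono)
  also have "\<dots> = (\<Sum>n<N. \<bar>sqc n\<bar>) * cnorm x" by (simp add: sum_distrib_right)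
  also have "\<dots> \<le> 2 * cnorm x" by (rule mult_right_mono[OF abs_sqc_sum_lt cnorm_nonneg])
  finally show ?thesis .
qed

lemma S_diff_bound:
  assumes "n \<le> m"
  shows "cnorm (S m x - S n x) \<le> (\<Sum>k\<in>{n..<m}. \<bar>sqc k\<bar>) * cnorm x"
proof -
  have "S m x = S n x + (\<Sum>k\<in>{n..<m}. complex_of_real (sqc k) *\<^sub>C (Q ^^ k) x)"
    unfolding S_def lessThan_atLeast0 using assms by (simp add: sum.atLeastLessThan_concat)
  hence "S m x - S n x = (\<Sum>k\<in>{n..<m}. complex_of_real (sqc k) *\<^sub>C (Q ^^ k) x)" by simp
  hence "cnorm (S m x - S n x) \<le> (\<Sum>k\<in>{n..<m}. cnorm (complex_of_real (sqc k) *\<^sub>C (Q ^^ k) x))"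
    using cnorm_sum by metis
  also have "\<dots> \<le> (\<Sum>k\<in>{n..<m}. \<bar>sqc k\<bar> * cnorm x)"
    by (rule sum_mono) (simp add: cnorm_scaleC Qn_norm mult_left_mono)
  also have "\<dots> = (\<Sum>k\<in>{n..<m}. \<bar>sqc k\<bar>) * cnorm x" by (simp add: sum_distrib_right)
  finally show ?thesis .
qed

lemma S_cauchy: "\<exists>L. cconv (\<lambda>N. S N x) L"
proof (rule ccomplete)
  fix e :: real assume e: "e > 0"
  define e' where "e' = e / (cnorm x + 1)"
  have e': "e' > 0" using e cnorm_nonneg[of x] by (simp add: e'_def)
  obtain N where N: "\<forall>m\<ge>N. \<forall>n. norm (\<Sum>k\<in>{m..<n}. \<bar>sqc k\<bar>) < e'"
    using summable_abs_sqc[unfolded summable_Cauchy] e' by blast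
  have "cnorm (S m x - S n x) < e" if "m \<ge> N" "n \<ge> N" for m n
  proof -
    have gen: "cnorm (S a x - S b x) < e" if "b \<le> a" "b \<ge> N" for a b
    proof -
      have "cnorm (S a x - S b x) \<le> (\<Sum>k\<in>{b..<a}. \<bar>sqc k\<bar>) * cnorm x" by (rule S_diff_bound[OF that(1)])
      also have "\<dots> \<le> e' * cnorm x"
        using N that(2) by (intro mult_right_mono) (auto simp: cnorm_nonneg less_imp_le)
      also have "\<dots> < e"
      proof -
        have "e' * cnorm x < e' * (cnorm x + 1)" using e' by simp
        thus ?thesis using e cnorm_nonneg[of x] by (simp add: e'_def)
      qed
      finally show ?thesis .
    qed
    show ?thesis
    proof (cases "n \<le> m")
      case True thus ?thesis using gen that by blast
    next
      case False thus ?thesis using gen[of m n] that cnorm_minus_commute by (metis nle_le)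
    qed
  qed
  thus "\<exists>N. \<forall>m\<ge>N. \<forall>n\<ge>N. cnorm (S m x - S n x) < e" by blast
qed

definition R :: "'a \<Rightarrow> 'a" where "R x = (SOME L. cconv (\<lambda>N. S N x) L)"

lemma R_conv: "cconv (\<lambda>N. S N x) (R x)"
  unfolding R_def using S_cauchy by (rule someI_ex)

lemma R_add: "R (x + y) = R x + R y"
proof -
  have "cconv (\<lambda>N. S N x + S N y) (R x + R y)" by (rule cconv_add[OF R_conv R_conv])
  hence "cconv (\<lambda>N. S N (x + y)) (R x + R y)" by (simp add: S_add)
  thus ?thesis using R_conv cconv_unique by blast
qed

lemma R_scale: "R (c *\<^sub>C x) = c *\<^sub>C R x"
proof -
  have "cconv (\<lambda>N. c *\<^sub>C S N x) (c *\<^sub>C R x)" by (rule cconv_scaleC[OF R_conv])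
  hence "cconv (\<lambda>N. S N (c *\<^sub>C x)) (c *\<^sub>C R x)" by (simp add: S_scale)
  thus ?thesis using R_conv cconv_unique by blast
qed

lemma R_norm: "cnorm (R x) \<le> 2 * cnorm x"
proof -
  have "(\<lambda>N. cnorm (S N x)) \<longlonglongrightarrow> cnorm (R x)" by (rule cconv_norm[OF R_conv])
  thus ?thesis by (rule LIMSEQ_le_const2) (use S_norm in auto)
qed

lemma R_bop: "bop UNIV R"
  unfolding bop_def using R_add R_scale R_norm by blast

lemma S_sym: "cinner (S N x) y = cinner x (S N y)"
proof -
  have "cinner (S N x) y = (\<Sum>n<N. complex_of_real (sqc n) * cinner ((Q ^^ n) x) y)"
    by (simp add: S_def cinner_sum_left cinner_scaleC_left)
  also have "\<dots> = (\<Sum>n<N. complex_of_real (sqc n) * cinner x ((Q ^^ n) y))" by (simp add: Qn_sym)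
  also have "\<dots> = cinner x (S N y)" by (simp add: S_def cinner_sum_right cinner_scaleC_right)
  finally show ?thesis .
qed

lemma R_sym: "cinner (R x) y = cinner x (R y)"
proof -
  have a: "(\<lambda>N. cinner (S N x) y) \<longlonglongrightarrow> cinner (R x) y" by (rule cconv_inner_left[OF R_conv])
  have b: "(\<lambda>N. cinner x (S N y)) \<longlonglongrightarrow> cinner x (R y)" by (rule cconv_inner[OF R_conv])
  have a': "(\<lambda>N. cinner x (S N y)) \<longlonglongrightarrow> cinner (R x) y" using a by (simp add: S_sym)
  show ?thesis by (rule LIMSEQ_unique[OF a' b])
qed

lemma S_pos: "0 \<le> Re (cinner x (S N x))"
proof -
  have "Re (cinner x (S N x)) = (\<Sum>n<N. sqc n * Re (cinner x ((Q ^^ n) x)))"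
    by (simp add: S_def cinner_sum_right cinner_scaleC_right)
  also have "\<dots> \<ge> (\<Sum>n<N. sqc n * (cnorm x)\<^sup>2)"
  proof (rule sum_mono)
    fix n assume "n \<in> {..<N}"
    show "sqc n * (cnorm x)\<^sup>2 \<le> sqc n * Re (cinner x ((Q ^^ n) x))"
    proof (cases "n = 0")
      case True thus ?thesis by (simp add: cnorm_sq)
    next
      case False
      hence sn: "sqc n \<le> 0" using sqc_nonpos by simp
      have "Re (cinner x ((Q ^^ n) x)) \<le> cnorm x * cnorm ((Q ^^ n) x)"
        using cauchy_schwarz[of x "(Q ^^ n) x"] complex_Re_le_cmod order_trans by blast
      also have "\<dots> \<le> cnorm x * cnorm x" by (rule mult_left_mono[OF Qn_norm cnorm_nonneg])
      finally have "Re (cinner x ((Q ^^ n) x)) \<le> (cnorm x)\<^sup>2" by (simp add: power2_eq_square)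
      thus ?thesis using sn by (rule mult_left_mono_neg)
    qed
  qed
  finally have h: "(\<Sum>n<N. sqc n) * (cnorm x)\<^sup>2 \<le> Re (cinner x (S N x))" by (simp add: sum_distrib_right)
  have "(\<Sum>n<N. sqc n) \<ge> 0" by (cases "N = 0") (simp_all add: sum_sqc_lt psa_nonneg)
  hence "0 \<le> (\<Sum>n<N. sqc n) * (cnorm x)\<^sup>2" by simp
  thus ?thesis using h by linarith
qed

lemma R_pos: "0 \<le> Re (cinner x (R x))"
proof -
  have "(\<lambda>N. cinner x (S N x)) \<longlonglongrightarrow> cinner x (R x)" by (rule cconv_inner[OF R_conv])
  hence "(\<lambda>N. Re (cinner x (S N x))) \<longlonglongrightarrow> Re (cinner x (R x))" by (rule tendsto_Re)
  thus ?thesis by (rule LIMSEQ_le_const) (use S_pos in auto)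
qed

lemma R_posop: "posop R"
  unfolding posop_def using R_bop R_sym R_pos by blast

lemma R_comm:
  assumes T: "bop UNIV T" "\<And>x. T (Q x) = Q (T x)"
  shows "T (R x) = R (T x)"
proof -
  have "cconv (\<lambda>N. T (S N x)) (T (R x))"
    by (rule bop_cconv[OF T(1) csubspace_UNIV _ _ R_conv]) auto
  moreover have "T (S N x) = S N (T x)" for N
    using T by (simp add: S_def bop_sum bopD_scale Qn_comm[OF T])
  ultimately have "cconv (\<lambda>N. S N (T x)) (T (R x))" by simp
  thus ?thesis using R_conv cconv_unique by blast
qed

lemma SS_expand: "S N (S N x) = (\<Sum>m<N. \<Sum>n<N. complex_of_real (sqc m * sqc n) *\<^sub>C (Q ^^ (m + n)) x)"
proof -
  have "S N (S N x) = (\<Sum>m<N. complex_of_real (sqc m) *\<^sub>C (Q ^^ m) (\<Sum>n<N. complex_of_real (sqc n) *\<^sub>C (Q ^^ n) x))"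
    by (simp add: S_def)
  also have "\<dots> = (\<Sum>m<N. \<Sum>n<N. complex_of_real (sqc m * sqc n) *\<^sub>C (Q ^^ (m + n)) x)"
    by (simp add: Qn_sum Qn_scale scaleC_sum_right scaleC_scaleC funpow_add)
  finally show ?thesis .
qed

lemma SS_bound:
  assumes N: "N \<ge> 2"
  shows "cnorm (S N (S N x) - (x - Q x)) \<le> (psa (N - 1))\<^sup>2 * cnorm x"
proof -
  define C where "C = {(m,n). m < N \<and> n < N \<and> N \<le> m + n}"
  define g where "g m n = complex_of_real (sqc m * sqc n) *\<^sub>C (Q ^^ (m + n)) x" for m n
  have finC: "finite C" unfolding C_def by (rule finite_subset[of _ "{..<N} \<times> {..<N}"]) auto
  have first: "(\<Sum>k<N. \<Sum>i\<le>k. g i (k - i)) = x - Q x"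
  proof -
    have "(\<Sum>k<N. \<Sum>i\<le>k. g i (k - i)) = (\<Sum>k<N. complex_of_real (cv k) *\<^sub>C (Q ^^ k) x)"
    proof (rule sum.cong[OF refl])
      fix k assume "k \<in> {..<N}"
      have "(\<Sum>i\<le>k. g i (k - i)) = (\<Sum>i\<le>k. complex_of_real (sqc i * sqc (k - i)) *\<^sub>C (Q ^^ k) x)"
        by (rule sum.cong) (auto simp: g_def)
      also have "\<dots> = complex_of_real (\<Sum>i\<le>k. sqc i * sqc (k - i)) *\<^sub>C (Q ^^ k) x"
        by (simp add: scaleC_sum_left)
      finally show "(\<Sum>i\<le>k. g i (k - i)) = complex_of_real (cv k) *\<^sub>C (Q ^^ k) x"
        by (simp add: sqc_conv_cv)
    qed
    also have "\<dots> = (Q ^^ 0) x - (Q ^^ 1) x" by (rule cv_sum_vec[OF N])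
    finally show ?thesis by simp
  qed
  have SS: "S N (S N x) = (x - Q x) + (\<Sum>(m,n)\<in>C. g m n)"
    unfolding SS_expand g_def[symmetric] C_def using dsplit[of g N] first by simp
  have realsplit: "(\<Sum>m<N. sqc m) * (\<Sum>n<N. sqc n) = (\<Sum>(m,n)\<in>C. sqc m * sqc n)"
  proof -
    have "(\<Sum>m<N. sqc m) * (\<Sum>n<N. sqc n) = (\<Sum>m<N. \<Sum>n<N. sqc m * sqc n)"
      by (simp add: sum_product)
    also have "\<dots> = (\<Sum>k<N. \<Sum>i\<le>k. sqc i * sqc (k - i)) + (\<Sum>(m,n)\<in>C. sqc m * sqc n)"
      unfolding C_def by (rule dsplit)
    also have "(\<Sum>k<N. \<Sum>i\<le>k. sqc i * sqc (k - i)) = 0"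
      by (simp add: sqc_conv_cv cv_sum_real[OF N])
    finally show ?thesis by simp
  qed
  have Cpos: "sqc m * sqc n \<ge> 0" if "(m,n) \<in> C" for m n
  proof -
    have "m \<ge> 1" "n \<ge> 1" using that by (auto simp: C_def)
    thus ?thesis using sqc_nonpos by (simp add: zero_le_mult_iff)
  qed
  have "cnorm (S N (S N x) - (x - Q x)) = cnorm (\<Sum>(m,n)\<in>C. g m n)" by (simp add: SS)
  also have "\<dots> \<le> (\<Sum>(m,n)\<in>C. cnorm (g m n))"
    using cnorm_sum[of "\<lambda>p. g (fst p) (snd p)" C] by (simp add: case_prod_beta)
  also have "\<dots> \<le> (\<Sum>(m,n)\<in>C. sqc m * sqc n * cnorm x)"
  proof (rule sum_mono)
    fix p assume p: "p \<in> C"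
    obtain m n where mn: "p = (m,n)" by (cases p)
    have "cnorm (g m n) = \<bar>sqc m * sqc n\<bar> * cnorm ((Q ^^ (m + n)) x)" by (simp add: g_def cnorm_scaleC del: of_real_mult)
    also have "\<dots> \<le> sqc m * sqc n * cnorm x" using Cpos[of m n] p mn
      by (simp add: mult_left_mono Qn_norm)
    finally show "(case p of (m, n) \<Rightarrow> cnorm (g m n)) \<le> (case p of (m, n) \<Rightarrow> sqc m * sqc n * cnorm x)"
      by (simp add: mn)
  qed
  also have "\<dots> = (\<Sum>(m,n)\<in>C. sqc m * sqc n) * cnorm x"
    by (simp add: sum_distrib_right case_prod_beta)
  also have "\<dots> = (psa (N - 1))\<^sup>2 * cnorm x"
    using realsplit N sum_sqc_lt[of N] by (simp add: power2_eq_square)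
  finally show ?thesis .
qed

lemma R_sq: "R (R x) = x - Q x"
proof -
  have A: "cconv (\<lambda>N. S N (S N x)) (x - Q x)"
  proof (rule cconv_eventually[where Nst=2])
    show "cnorm (S N (S N x) - (x - Q x)) \<le> (psa (N - 1))\<^sup>2 * cnorm x" if "N \<ge> 2" for N
      by (rule SS_bound[OF that])
    have "(\<lambda>N. psa (N - 1)) \<longlonglongrightarrow> 0"
      by (rule LIMSEQ_imp_Suc) (simp add: psa_tendsto)
    hence "(\<lambda>N. (psa (N - 1))\<^sup>2 * cnorm x) \<longlonglongrightarrow> 0\<^sup>2 * cnorm x" by (intro tendsto_mult tendsto_power tendsto_const)
    thus "(\<lambda>N. (psa (N - 1))\<^sup>2 * cnorm x) \<longlonglongrightarrow> 0" by simp
  qed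
  have B: "cconv (\<lambda>N. S N (S N x)) (R (R x))"
  proof (rule cconv_le2[OF R_conv[of x] R_conv[of "R x"], where a=2])
    fix N
    have "S N (S N x) - R (R x) = S N (S N x - R x) + (S N (R x) - R (R x))"
      using S_add[of N "S N x - R x" "R x"] by simp
    hence "cnorm (S N (S N x) - R (R x)) \<le> cnorm (S N (S N x - R x)) + cnorm (S N (R x) - R (R x))"
      using cnorm_triangle by metis
    also have "\<dots> \<le> 2 * cnorm (S N x - R x) + cnorm (S N (R x) - R (R x))"
      using S_norm by simp
    finally show "cnorm (S N (S N x) - R (R x)) \<le> 2 * cnorm (S N x - R x) + cnorm (S N (R x) - R (R x))" .
  qed
  show ?thesis using cconv_unique[OF B A] .
qed

lemma R_unique:
  assumes T: "posop T" "\<And>x. T (T x) = x - Q x"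
  shows "T = R"
proof -
  have Tb: "bop UNIV T" and Ts: "\<And>x y. cinner (T x) y = cinner x (T y)"
    using T(1) by (auto simp: posop_def)
  have TQ: "T (Q x) = Q (T x)" for x
  proof -
    have "Q x = x - T (T x)" using T(2)[of x] by simp
    hence "T (Q x) = T x - T (T (T x))" using Tb bop_diff[OF Tb csubspace_UNIV] by simp
    also have "\<dots> = Q (T x)" using T(2)[of "T x"] by simp
    finally show ?thesis .
  qed
  have RT: "T (R x) = R (T x)" for x by (rule R_comm[OF Tb TQ])
  have Rd: "R (a - b) = R a - R b" for a b by (rule bop_diff[OF R_bop csubspace_UNIV]) auto
  have Td: "T (a - b) = T a - T b" for a b by (rule bop_diff[OF Tb csubspace_UNIV]) auto
  show ?thesis
  proof (rule ext)
    fix x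
    define y where "y = R x - T x"
    have "R y + T y = 0"
      unfolding y_def Rd Td R_sq RT T(2) by simp
    hence "cinner y (R y) + cinner y (T y) = 0" by (metis cinner_add_right cinner_zero_right)
    hence "Re (cinner y (R y)) + Re (cinner y (T y)) = 0" by (metis plus_complex.sel(1) zero_complex.sel(1))
    moreover have "0 \<le> Re (cinner y (R y))" by (rule R_pos)
    moreover have "0 \<le> Re (cinner y (T y))" using T(1) by (simp add: posop_def)
    ultimately have "Re (cinner y (R y)) = 0" "Re (cinner y (T y)) = 0" by linarith+
    hence "R y = 0" "T y = 0" using posop_zero R_posop T(1) by blast+
    hence yy: "R y - T y = 0" by simp
    have "cinner y y = cinner (R x - T x) y" by (simp add: y_def)
    also have "\<dots> = cinner x (R y - T y)" by (simp add: cinner_diff_left cinner_diff_right R_sym Ts)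
    also have "\<dots> = 0" by (simp add: yy)
    finally have "y = 0" using cinner_eq_zero by blast
    thus "T x = R x" by (simp add: y_def)
  qed
qed

lemma the_sqrt: "(THE D. posop D \<and> (\<forall>x. D (D x) = x - Q x)) = R"
proof (rule the_equality)
  show "posop R \<and> (\<forall>x. R (R x) = x - Q x)" using R_posop R_sq by blast
  fix D assume h: "posop D \<and> (\<forall>x. D (D x) = x - Q x)"
  hence "posop D" "\<And>x. D (D x) = x - Q x" by auto
  thus "D = R" by (rule R_unique)
qed

end


lemma norm_vec2: "norm (v :: complex^2) = sqrt ((cmod (v$1))\<^sup>2 + (cmod (v$2))\<^sup>2)"
  by (simp add: norm_vec_def L2_set_def UNIV_2)

lemma mv2: "((M :: complex^2^2) *v v) $ i = M$i$1 * v$1 + M$i$2 * v$2"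
  by (simp add: matrix_vector_mult_def UNIV_2)

lemma hadamard2:
  "((cmod a)\<^sup>2 + (cmod c)\<^sup>2) * ((cmod b)\<^sup>2 + (cmod d)\<^sup>2) = (cmod (a*d - b*c))\<^sup>2 + (cmod (a * cnj b + c * cnj d))\<^sup>2"
  by (simp only: cmod_power2) (simp add: power2_eq_square algebra_simps)

lemma det_contraction:
  fixes M :: "complex^2^2"
  assumes "\<forall>x. norm (M *v x) \<le> norm x"
  shows "cmod (det M) \<le> 1"
proof -
  define e1 :: "complex^2" where "e1 = (\<chi> i. if i = 1 then 1 else 0)"
  define e2 :: "complex^2" where "e2 = (\<chi> i. if i = 2 then 1 else 0)"
  have n1: "norm e1 = 1" "norm e2 = 1" by (simp_all add: norm_vec2 e1_def e2_def)
  have "norm (M *v e1) = sqrt ((cmod (M$1$1))\<^sup>2 + (cmod (M$2$1))\<^sup>2)"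
    by (simp add: norm_vec2 mv2 e1_def)
  hence c1: "(cmod (M$1$1))\<^sup>2 + (cmod (M$2$1))\<^sup>2 \<le> 1" using assms n1 by (metis real_sqrt_le_1_iff)
  have "norm (M *v e2) = sqrt ((cmod (M$1$2))\<^sup>2 + (cmod (M$2$2))\<^sup>2)"
    by (simp add: norm_vec2 mv2 e2_def)
  hence c2: "(cmod (M$1$2))\<^sup>2 + (cmod (M$2$2))\<^sup>2 \<le> 1" using assms n1 by (metis real_sqrt_le_1_iff)
  have "(cmod (det M))\<^sup>2 \<le> ((cmod (M$1$1))\<^sup>2 + (cmod (M$2$1))\<^sup>2) * ((cmod (M$1$2))\<^sup>2 + (cmod (M$2$2))\<^sup>2)"
    using hadamard2[of "M$1$1" "M$2$1" "M$1$2" "M$2$2"] by (simp add: det_2)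
  also have "\<dots> \<le> 1 * 1" using c1 c2 by (intro mult_mono) auto
  finally have "(cmod (det M))\<^sup>2 \<le> 1" by simp
  thus ?thesis by (simp add: power_le_one_iff abs_square_le_1)
qed

lemma tb_z3: "z \<in> tetrablock_closed \<Longrightarrow> cmod (snd (snd z)) \<le> 1"
  unfolding tetrablock_closed_def using det_contraction by auto

lemma tb_nonempty: "tetrablock_closed \<noteq> {}"
proof -
  have "((0::complex^2^2) $ 1 $ 1, (0::complex^2^2) $ 2 $ 2, det (0::complex^2^2)) \<in> tetrablock_closed"
    unfolding tetrablock_closed_def by (rule CollectI, rule exI[of _ 0]) simp
  thus ?thesis by blast
qed

lemma tc_contraction:
  assumes tc: "tetrablock_contraction A B P"
  shows "cnorm (P x) \<le> cnorm x"
proof -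
  define S :: "(nat \<times> nat \<times> nat) set" where "S = {(0,0,0), (0,0,1)}"
  define q :: "nat \<times> nat \<times> nat \<Rightarrow> complex" where "q t = (if t = (0,0,0) then 1 else 0)" for t
  define p :: "nat \<times> nat \<times> nat \<Rightarrow> complex" where "p t = (if t = (0,0,1) then 1 else 0)" for t
  have pq: "poly3 S q z = 1" "poly3 S p z = snd (snd z)" for z
    by (simp_all add: poly3_def S_def q_def p_def)
  have oq: "opoly3 S q A B P y = y" "opoly3 S p A B P y = P y" for y
    by (simp_all add: opoly3_def S_def q_def p_def scaleC_one)
  have idb: "bop UNIV (\<lambda>x. x)" by (auto simp: bop_def intro!: exI[of _ 1])
  have tcq: "\<forall>S p q X. finite S \<longrightarrow> (\<forall>z\<in>tetrablock_closed. poly3 S q z \<noteq> 0)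
        \<longrightarrow> bop UNIV X \<longrightarrow> (\<forall>x. X (opoly3 S q A B P x) = x) \<longrightarrow> (\<forall>x. opoly3 S q A B P (X x) = x)
        \<longrightarrow> (\<forall>x. cnorm (opoly3 S p A B P (X x))
               \<le> (SUP z\<in>tetrablock_closed. cmod (poly3 S p z / poly3 S q z)) * cnorm x)"
    using tc unfolding tetrablock_contraction_def by blast
  have f: "finite S" by (simp add: S_def)
  have nz: "\<forall>z\<in>tetrablock_closed. poly3 S q z \<noteq> 0" by (simp add: pq)
  have i1: "\<forall>x. (\<lambda>x. x) (opoly3 S q A B P x) = x" by (simp add: oq)
  have i2: "\<forall>x. opoly3 S q A B P ((\<lambda>x. x) x) = x" by (simp add: oq)
  have "\<forall>x. cnorm (opoly3 S p A B P ((\<lambda>x. x) x))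
           \<le> (SUP z\<in>tetrablock_closed. cmod (poly3 S p z / poly3 S q z)) * cnorm x"
    using mp[OF mp[OF mp[OF mp[OF mp[OF spec[OF spec[OF spec[OF spec[OF tcq, of S], of p], of q], of "\<lambda>x. x"] f] nz] idb] i1] i2] .
  hence h: "cnorm (P x) \<le> (SUP z\<in>tetrablock_closed. cmod (snd (snd z))) * cnorm x"
    by (simp add: pq oq)
  have "(SUP z\<in>tetrablock_closed. cmod (snd (snd z))) \<le> 1"
    by (rule cSUP_least[OF tb_nonempty tb_z3])
  hence "(SUP z\<in>tetrablock_closed. cmod (snd (snd z))) * cnorm x \<le> 1 * cnorm x"
    by (rule mult_right_mono) (simp add: cnorm_nonneg)
  thus ?thesis using h by simp
qed


lemma bop_comp: "bop UNIV F \<Longrightarrow> bop UNIV G \<Longrightarrow> bop UNIV (\<lambda>x. F (G x))"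
proof -
  assume F: "bop UNIV F" and G: "bop UNIV G"
  obtain K1 where K1: "K1 \<ge> 0" "\<forall>x\<in>UNIV. cnorm (F x) \<le> K1 * cnorm x" using bopD_bound[OF F] by blast
  obtain K2 where K2: "K2 \<ge> 0" "\<forall>x\<in>UNIV. cnorm (G x) \<le> K2 * cnorm x" using bopD_bound[OF G] by blast
  have "cnorm (F (G x)) \<le> (K1 * K2) * cnorm x" for x
  proof -
    have "cnorm (F (G x)) \<le> K1 * cnorm (G x)" using K1 by simp
    also have "\<dots> \<le> K1 * (K2 * cnorm x)" using K1(1) K2 by (simp add: mult_left_mono)
    finally show ?thesis by (simp add: mult.assoc)
  qed
  thus ?thesis using F G unfolding bop_def by auto
qed

lemma adjU: "bop UNIV F \<Longrightarrow> bop UNIV (adj UNIV F)"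
  using adj_props(1)[OF csubspace_UNIV cclosed_UNIV] by blast
lemma adjU_right: "bop UNIV F \<Longrightarrow> cinner (F x) y = cinner x (adj UNIV F y)"
  using adj_props(2)[OF csubspace_UNIV cclosed_UNIV] by blast
lemma adjU_left: "bop UNIV F \<Longrightarrow> cinner (adj UNIV F x) y = cinner x (F y)"
  using adj_left[OF csubspace_UNIV cclosed_UNIV] by blast

lemma qop_PP:
  assumes P: "bop UNIV P" and c: "\<And>x. cnorm (P x) \<le> cnorm x"
  shows "qop (\<lambda>x. adj UNIV P (P x))"
proof
  show "bop UNIV (\<lambda>x. adj UNIV P (P x))" by (rule bop_comp[OF adjU[OF P] P])
  show "cinner (adj UNIV P (P x)) y = cinner x (adj UNIV P (P y))" for x y
    using adjU_left[OF P, of "P x" y] adjU_right[OF P, of x "P y"] by simp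
  show "cnorm (adj UNIV P (P x)) \<le> cnorm x" for x
  proof -
    define z where "z = adj UNIV P (P x)"
    have "(cnorm z)\<^sup>2 = Re (cinner z z)" by (simp add: cnorm_sq)
    also have "cinner z z = cinner (P x) (P z)" using adjU_left[OF P, of "P x" z] by (simp add: z_def)
    also have "Re (cinner (P x) (P z)) \<le> cnorm (P x) * cnorm (P z)"
      using cauchy_schwarz[of "P x" "P z"] complex_Re_le_cmod order_trans by blast
    also have "\<dots> \<le> cnorm x * cnorm z"
      by (rule mult_mono[OF c c cnorm_nonneg cnorm_nonneg])
    finally have h: "cnorm z * cnorm z \<le> cnorm x * cnorm z" by (simp add: power2_eq_square)
    show "cnorm z \<le> cnorm x"
    proof (cases "cnorm z = 0")
      case True thus ?thesis using cnorm_nonneg[of x] by simp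
    next
      case False
      hence "cnorm z > 0" using cnorm_nonneg[of z] by (simp add: order_le_less)
      thus ?thesis using h by simp
    qed
  qed
qed

lemma defect_facts:
  assumes P: "bop UNIV P" and c: "\<And>x. cnorm (P x) \<le> cnorm x"
  shows "posop (defect P)" "\<And>x. defect P (defect P x) = x - adj UNIV P (P x)"
proof -
  interpret qop "\<lambda>x. adj UNIV P (P x)" by (rule qop_PP[OF P c])
  have "defect P = R" unfolding defect_def by (rule the_sqrt)
  thus "posop (defect P)" "\<And>x. defect P (defect P x) = x - adj UNIV P (P x)"
    using R_posop R_sq by auto
qed

locale dctx =
  fixes D :: "'a::chilbert \<Rightarrow> 'a" and DP :: "'a set"
  assumes Dpos: "posop D"
    and DP_def: "DP = {x. \<forall>e>0. \<exists>y. cnorm (x - D y) < e}"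
begin

lemma Dbop: "bop UNIV D" using Dpos by (simp add: posop_def)
lemma Dsym: "cinner (D x) y = cinner x (D y)" using Dpos by (simp add: posop_def)
lemma Dadd: "D (x + y) = D x + D y" using bopD_add[OF Dbop] by simp
lemma Dscale: "D (c *\<^sub>C x) = c *\<^sub>C D x" using bopD_scale[OF Dbop] by simp
lemma Ddiff: "D (x - y) = D x - D y" using bop_diff[OF Dbop csubspace_UNIV] by simp
lemma D0: "D 0 = 0" using bop_zero[OF Dbop csubspace_UNIV] .

lemma D_in: "D y \<in> DP" unfolding DP_def by (auto intro!: exI[of _ y])

lemma DPD: assumes "x \<in> DP" "e > 0" shows "\<exists>y. cnorm (x - D y) < e"
proof -
  have "x \<in> {x. \<forall>e>0. \<exists>y. cnorm (x - D y) < e}" using assms(1) DP_def by simp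
  thus ?thesis using assms(2) by simp
qed

lemma DPI: assumes "\<And>e. e > 0 \<Longrightarrow> \<exists>y. cnorm (x - D y) < e" shows "x \<in> DP"
proof -
  have "x \<in> {x. \<forall>e>0. \<exists>y. cnorm (x - D y) < e}" using assms by simp
  thus ?thesis using DP_def by simp
qed

lemma DP0: "0 \<in> DP"
proof -
  have "D 0 \<in> DP" by (rule D_in)
  thus ?thesis by (simp only: D0)
qed

lemma DP_add: assumes x: "x \<in> DP" and y: "y \<in> DP" shows "x + y \<in> DP"
proof (rule DPI)
  fix e :: real assume e: "e > 0"
  obtain a where a: "cnorm (x - D a) < e/2" using DPD[OF x, of "e/2"] e by auto
  obtain b where b: "cnorm (y - D b) < e/2" using DPD[OF y, of "e/2"] e by auto
  have "x + y - D (a + b) = (x - D a) + (y - D b)" by (simp add: Dadd)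
  hence "cnorm (x + y - D (a + b)) \<le> cnorm (x - D a) + cnorm (y - D b)" by (metis cnorm_triangle)
  thus "\<exists>z. cnorm (x + y - D z) < e" using a b by (intro exI[of _ "a + b"]) linarith
qed

lemma DP_scale: assumes x: "x \<in> DP" shows "c *\<^sub>C x \<in> DP"
proof (rule DPI)
  fix e :: real assume e: "e > 0"
  have e': "e / (cmod c + 1) > 0" by (rule divide_pos_pos[OF e]) (smt (verit) norm_ge_zero)
  obtain a where a: "cnorm (x - D a) < e / (cmod c + 1)" using DPD[OF x e'] by blast
  have "c *\<^sub>C x - D (c *\<^sub>C a) = c *\<^sub>C (x - D a)" by (simp add: Dscale scaleC_diff_right)
  hence "cnorm (c *\<^sub>C x - D (c *\<^sub>C a)) = cmod c * cnorm (x - D a)" by (simp add: cnorm_scaleC)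
  also have "\<dots> \<le> cmod c * (e / (cmod c + 1))" by (rule mult_left_mono[OF less_imp_le[OF a] norm_ge_zero])
  also have "\<dots> < e"
  proof -
    have "cmod c * (e / (cmod c + 1)) = e * (cmod c / (cmod c + 1))" by simp
    also have "\<dots> < e * 1" using e by (intro mult_strict_left_mono) (simp_all add: divide_less_eq_1 add_nonneg_pos)
    finally show ?thesis by simp
  qed
  finally show "\<exists>z. cnorm (c *\<^sub>C x - D z) < e" by blast
qed

lemma DP_sub: "csubspace DP"
  unfolding csubspace_def using DP0 DP_add DP_scale by blast

lemma DP_closed: "cclosed DP"
  unfolding cclosed_def
proof (intro allI impI)
  fix X L assume X: "\<forall>n. X n \<in> DP" and c: "cconv X L"
  show "L \<in> DP"
  proof (rule DPI)
    fix e :: real assume e: "e > 0"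
    obtain N where N: "\<forall>n\<ge>N. cnorm (X n - L) < e/2" using cconvD[OF c, of "e/2"] e by auto
    obtain a where a: "cnorm (X N - D a) < e/2" using DPD[of "X N" "e/2"] X e by auto
    have "cnorm (L - D a) \<le> cnorm (L - X N) + cnorm (X N - D a)" by (rule cnorm_diff_triangle)
    moreover have "cnorm (L - X N) < e/2" using N cnorm_minus_commute by (metis order_refl)
    ultimately show "\<exists>y. cnorm (L - D y) < e" using a by (intro exI[of _ a]) linarith
  qed
qed

lemma D_inj: assumes x: "x \<in> DP" and Dx: "D x = 0" shows "x = 0"
proof -
  have ort: "cinner x (D y) = 0" for y using Dsym[of x y] Dx by simp
  have bnd: "cnorm x * cnorm x \<le> cnorm x * e" if e: "e > 0" for e
  proof -
    obtain y where y: "cnorm (x - D y) < e" using DPD[OF x e] by blast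
    have "cinner x x = cinner x (x - D y)" by (simp add: cinner_diff_right ort)
    hence "(cnorm x)\<^sup>2 = Re (cinner x (x - D y))" by (simp add: cnorm_sq)
    also have "\<dots> \<le> cnorm x * cnorm (x - D y)"
      using cauchy_schwarz[of x "x - D y"] complex_Re_le_cmod order_trans by blast
    also have "\<dots> \<le> cnorm x * e" using y by (simp add: mult_left_mono cnorm_nonneg less_imp_le)
    finally show ?thesis by (simp add: power2_eq_square)
  qed
  have "cnorm x * cnorm x \<le> 0"
  proof (cases "cnorm x = 0")
    case False
    hence pos: "cnorm x > 0" using cnorm_nonneg[of x] by (simp add: order_le_less)
    have "cnorm x * cnorm x \<le> cnorm x * (cnorm x / 2)" using pos by (rule bnd[OF half_gt_zero])
    hence False using pos by simp
    thus ?thesis ..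
  qed simp
  hence "cnorm x = 0" using cnorm_nonneg[of x] by (metis mult_eq_0_iff mult_le_0_iff order_antisym)
  thus ?thesis by simp
qed

lemma DPinj_eq: "x \<in> DP \<Longrightarrow> y \<in> DP \<Longrightarrow> D x = D y \<Longrightarrow> x = y"
  using D_inj[of "x - y"] sub_diff[OF DP_sub] Ddiff by auto

end


lemma toe3: "toeplitz [aA, aB, aC] f n = aA (f n) + (if 1 \<le> n then aB (f (n - 1)) else 0) + (if 2 \<le> n then aC (f (n - 2)) else 0)"
  by (simp add: toeplitz_def eval_nat_numeral lessThan_Suc)

definition sh :: "(nat \<Rightarrow> 'a::zero) \<Rightarrow> nat \<Rightarrow> nat \<Rightarrow> 'a" where
  "sh f n k = (if k \<le> n then f (n - k) else 0)"

lemma toe3_sh: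
  assumes "aB 0 = 0" "aC 0 = 0"
  shows "toeplitz [aA, aB, aC] f n = aA (sh f n 0) + aB (sh f n 1) + aC (sh f n 2)"
  using assms by (simp add: toe3 sh_def)

lemma sh_toe:
  assumes "aA 0 = 0" "aB 0 = 0" "aC 0 = 0"
  shows "sh (toeplitz [aA, aB, aC] f) n j = aA (sh f n j) + aB (sh f n (j+1)) + aC (sh f n (j+2))"
proof (cases "j \<le> n")
  case True
  have "sh (toeplitz [aA, aB, aC] f) n j = toeplitz [aA, aB, aC] f (n - j)" using True by (simp add: sh_def)
  also have "\<dots> = aA (sh f (n - j) 0) + aB (sh f (n - j) 1) + aC (sh f (n - j) 2)"
    by (rule toe3_sh[where aA=aA and aB=aB and aC=aC, OF assms(2,3)])
  finally have h: "sh (toeplitz [aA, aB, aC] f) n j = aA (sh f (n - j) 0) + aB (sh f (n - j) 1) + aC (sh f (n - j) 2)" .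
  have g: "sh f (n - j) k = sh f n (j + k)" for k using True by (cases "j + k \<le> n") (auto simp: sh_def diff_diff_add)
  show ?thesis unfolding h g by simp
next
  case False thus ?thesis using assms by (simp add: sh_def)
qed

lemma sh_in: "csubspace M \<Longrightarrow> (\<And>n. f n \<in> M) \<Longrightarrow> sh f n k \<in> M"
  by (simp add: sh_def sub0)

lemma add3: "bop M T \<Longrightarrow> x \<in> M \<Longrightarrow> y \<in> M \<Longrightarrow> z \<in> M \<Longrightarrow> csubspace M \<Longrightarrow> T (x + y + z) = T x + T y + T z"
  by (simp add: bopD_add sub_add)

lemma toe_in:
  assumes M: "csubspace M" and b: "bop M aA" "bop M aB" "bop M aC" and f: "\<And>n. f n \<in> M"
  shows "toeplitz [aA, aB, aC] f n \<in> M"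
  using M b f by (simp add: toe3 sub_add sub0 bopD_in)

lemma toe_add:
  assumes M: "csubspace M" and b: "bop M aA" "bop M aB" "bop M aC" and u: "\<And>n. u n \<in> M" and v: "\<And>n. v n \<in> M"
  shows "toeplitz [aA, aB, aC] (\<lambda>m. u m + v m) n = toeplitz [aA, aB, aC] u n + toeplitz [aA, aB, aC] v n"
  using M b u v by (simp add: toe3 bopD_add algebra_simps)

lemma toeplitz_comm:
  assumes M: "csubspace M"
    and a: "bop M aA" "bop M aB" "bop M aC" and b: "bop M bA" "bop M bB" "bop M bC"
    and f: "\<And>n. f n \<in> M"
    and e0: "\<And>x. x \<in> M \<Longrightarrow> aA (bA x) = bA (aA x)"
    and e1: "\<And>x. x \<in> M \<Longrightarrow> aA (bB x) + aB (bA x) = bA (aB x) + bB (aA x)"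
    and e2: "\<And>x. x \<in> M \<Longrightarrow> aA (bC x) + aB (bB x) + aC (bA x) = bA (aC x) + bB (aB x) + bC (aA x)"
    and e3: "\<And>x. x \<in> M \<Longrightarrow> aB (bC x) + aC (bB x) = bB (aC x) + bC (aB x)"
    and e4: "\<And>x. x \<in> M \<Longrightarrow> aC (bC x) = bC (aC x)"
  shows "toeplitz [aA, aB, aC] (toeplitz [bA, bB, bC] f) n = toeplitz [bA, bB, bC] (toeplitz [aA, aB, aC] f) n"
proof -
  have z: "aA 0 = 0" "aB 0 = 0" "aC 0 = 0" "bA 0 = 0" "bB 0 = 0" "bC 0 = 0"
    using a b M by (simp_all add: bop_zero)
  define y where "y k = sh f n k" for k
  have y: "y k \<in> M" for k unfolding y_def by (rule sh_in[OF M f])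
  have L: "toeplitz [aA, aB, aC] (toeplitz [bA, bB, bC] f) n =
      aA (bA (y 0) + bB (y 1) + bC (y 2)) + aB (bA (y 1) + bB (y 2) + bC (y 3)) + aC (bA (y 2) + bB (y 3) + bC (y 4))"
    using toe3_sh[where aA=aA and aB=aB and aC=aC and f="toeplitz [bA, bB, bC] f" and n=n, OF z(2,3)]
      sh_toe[where aA=bA and aB=bB and aC=bC and f=f and n=n, OF z(4,5,6)]
    by (simp add: y_def eval_nat_numeral)
  have R: "toeplitz [bA, bB, bC] (toeplitz [aA, aB, aC] f) n =
      bA (aA (y 0) + aB (y 1) + aC (y 2)) + bB (aA (y 1) + aB (y 2) + aC (y 3)) + bC (aA (y 2) + aB (y 3) + aC (y 4))"
    using toe3_sh[where aA=bA and aB=bB and aC=bC and f="toeplitz [aA, aB, aC] f" and n=n, OF z(5,6)]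
      sh_toe[where aA=aA and aB=aB and aC=aC and f=f and n=n, OF z(1,2,3)]
    by (simp add: y_def eval_nat_numeral)
  have bin: "bA (y k) \<in> M" "bB (y k) \<in> M" "bC (y k) \<in> M" "aA (y k) \<in> M" "aB (y k) \<in> M" "aC (y k) \<in> M" for k
    using a b y by (simp_all add: bopD_in)
  have L2: "aA (bA (y 0) + bB (y 1) + bC (y 2)) + aB (bA (y 1) + bB (y 2) + bC (y 3)) + aC (bA (y 2) + bB (y 3) + bC (y 4))
     = aA (bA (y 0)) + (aA (bB (y 1)) + aB (bA (y 1))) + (aA (bC (y 2)) + aB (bB (y 2)) + aC (bA (y 2)))
       + (aB (bC (y 3)) + aC (bB (y 3))) + aC (bC (y 4))"
    using add3[OF a(1) bin(1) bin(2) bin(3) M] add3[OF a(2) bin(1) bin(2) bin(3) M] add3[OF a(3) bin(1) bin(2) bin(3) M]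
    by (simp add: ac_simps)
  have R2: "bA (aA (y 0) + aB (y 1) + aC (y 2)) + bB (aA (y 1) + aB (y 2) + aC (y 3)) + bC (aA (y 2) + aB (y 3) + aC (y 4))
     = bA (aA (y 0)) + (bA (aB (y 1)) + bB (aA (y 1))) + (bA (aC (y 2)) + bB (aB (y 2)) + bC (aA (y 2)))
       + (bB (aC (y 3)) + bC (aB (y 3))) + bC (aC (y 4))"
    using add3[OF b(1) bin(4) bin(5) bin(6) M] add3[OF b(2) bin(4) bin(5) bin(6) M] add3[OF b(3) bin(4) bin(5) bin(6) M]
    by (simp add: ac_simps)
  show ?thesis unfolding L R L2 R2 using e0[OF y] e1[OF y] e2[OF y] e3[OF y] e4[OF y] by simp
qed

lemma toeplitz_delta:
  assumes M: "csubspace M"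
    and a: "bop M aA" "bop M aB" "bop M aC" and b: "bop M bA" "bop M bB" "bop M bC"
    and x: "x \<in> M"
  defines "d \<equiv> (\<lambda>n. if n = 0 then x else 0)"
  shows "toeplitz [aA, aB, aC] (toeplitz [bA, bB, bC] d) 0 = aA (bA x)"
    "toeplitz [aA, aB, aC] (toeplitz [bA, bB, bC] d) 1 = aA (bB x) + aB (bA x)"
    "toeplitz [aA, aB, aC] (toeplitz [bA, bB, bC] d) 2 = aA (bC x) + aB (bB x) + aC (bA x)"
proof -
  have z: "aA 0 = 0" "aB 0 = 0" "aC 0 = 0" "bA 0 = 0" "bB 0 = 0" "bC 0 = 0"
    using a b M by (simp_all add: bop_zero)
  show "toeplitz [aA, aB, aC] (toeplitz [bA, bB, bC] d) 0 = aA (bA x)"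
    by (simp add: toe3 d_def)
  show "toeplitz [aA, aB, aC] (toeplitz [bA, bB, bC] d) 1 = aA (bB x) + aB (bA x)"
    by (simp add: toe3 d_def z)
  show "toeplitz [aA, aB, aC] (toeplitz [bA, bB, bC] d) 2 = aA (bC x) + aB (bB x) + aC (bA x)"
    by (simp add: toe3 d_def z)
qed


lemma bop_const0: "csubspace M \<Longrightarrow> bop M (\<lambda>_. 0)"
  unfolding bop_def by (auto simp: sub0 intro!: exI[of _ 0])

lemma bop_id: "bop M id"
  unfolding bop_def by (auto intro!: exI[of _ 1])

lemma lin_comb2: "x - y = p + q \<Longrightarrow> p = 0 \<Longrightarrow> q = (0::'a::ab_group_add) \<Longrightarrow> x = y"
  by simp


theorem lemma4p3:
  fixes A B P F1 F2 Xi :: "'h::chilbert \<Rightarrow> 'h"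
  defines "D \<equiv> defect P"
    and "DP \<equiv> defect_space P"
    and "K \<equiv> {(h, f). f \<in> ell2 (defect_space P)} :: ('h \<times> (nat \<Rightarrow> 'h)) set"
  defines "V1 \<equiv> \<lambda>(h, f). (A h, \<lambda>n. (if n = 0 then Xi (D h)
                                    else if n = 1 then adj DP F2 (D h) else 0)
                               + toeplitz [F1, Xi, adj DP F2] f n)"
    and "V2 \<equiv> \<lambda>(h, f). (B h, \<lambda>n. (if n = 0 then adj DP Xi (D h)
                                    else if n = 1 then adj DP F1 (D h) else 0)
                               + toeplitz [F2, adj DP Xi, adj DP F1] f n)"
    and "V3 \<equiv> \<lambda>(h, f). (P h, \<lambda>n. (if n = 1 then D h else 0)
                               + toeplitz [\<lambda>_. 0, \<lambda>_. 0, id] f n)"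
  assumes tc: "tetrablock_contraction A B P"
    and F1: "bop DP F1" and F2: "bop DP F2" and Xi: "bop DP Xi"
    and fund1: "\<forall>h. A h - adj UNIV B (P h) = D (F1 (D h))"
    and fund2: "\<forall>h. B h - adj UNIV A (P h) = D (F2 (D h))"
  shows "((\<forall>k\<in>K. V1 (V2 k) = V2 (V1 k)) \<and> (\<forall>k\<in>K. V1 (V3 k) = V3 (V1 k))
           \<and> (\<forall>k\<in>K. V2 (V3 k) = V3 (V2 k)))
     \<longleftrightarrow>
         ((\<forall>h. Xi (adj DP F1 (D (P h))) - adj DP Xi (adj DP F2 (D (P h))) = 0)
        \<and> (\<forall>x\<in>DP. (F2 (adj DP F2 x) - adj DP F2 (F2 x)) - (F1 (adj DP F1 x) - adj DP F1 (F1 x))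
                  = Xi (adj DP Xi x) - adj DP Xi (Xi x))
        \<and> (\<forall>x\<in>DP. F1 (F2 x) - F2 (F1 x) = 0)
        \<and> (\<forall>x\<in>DP. Xi (F2 x) - F2 (Xi x) = adj DP Xi (F1 x) - F1 (adj DP Xi x))
        \<and> (\<forall>h. Xi (D (P h)) = 0) \<and> (\<forall>h. adj DP Xi (D (P h)) = 0))"
proof -
  have Ab: "bop UNIV A" and Bb: "bop UNIV B" and Pb: "bop UNIV P"
    and AB: "\<And>x. A (B x) = B (A x)" and AP: "\<And>x. A (P x) = P (A x)" and BP: "\<And>x. B (P x) = P (B x)"
    using tc unfolding tetrablock_contraction_def by auto
  have Pc: "\<And>x. cnorm (P x) \<le> cnorm x" by (rule tc_contraction[OF tc])
  have Dpos: "posop D" and Dsq: "\<And>x. D (D x) = x - adj UNIV P (P x)"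
    using defect_facts[OF Pb Pc] unfolding D_def by auto
  have DPe: "DP = {x. \<forall>e>0. \<exists>y. cnorm (x - D y) < e}" unfolding DP_def defect_space_def D_def ..
  note DPdef0 = DP_def
  interpret dctx D DP by unfold_locales (rule Dpos, rule DPe)
  have M: "csubspace DP" by (rule DP_sub)
  have Mc: "cclosed DP" by (rule DP_closed)
  define F1s where "F1s = adj DP F1"
  define F2s where "F2s = adj DP F2"
  define Xs where "Xs = adj DP Xi"
  have F1sb: "bop DP F1s" using adj_props(1)[OF M Mc F1] by (simp add: F1s_def)
  have F2sb: "bop DP F2s" using adj_props(1)[OF M Mc F2] by (simp add: F2s_def)
  have Xsb: "bop DP Xs" using adj_props(1)[OF M Mc Xi] by (simp add: Xs_def)
  have F1R: "cinner (F1 x) y = cinner x (F1s y)" if "x \<in> DP" "y \<in> DP" for x y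
    using adj_props(2)[OF M Mc F1 that] by (simp add: F1s_def)
  have F2R: "cinner (F2 x) y = cinner x (F2s y)" if "x \<in> DP" "y \<in> DP" for x y
    using adj_props(2)[OF M Mc F2 that] by (simp add: F2s_def)
  have XR: "cinner (Xi x) y = cinner x (Xs y)" if "x \<in> DP" "y \<in> DP" for x y
    using adj_props(2)[OF M Mc Xi that] by (simp add: Xs_def)
  have F1L: "cinner (F1s x) y = cinner x (F1 y)" if "x \<in> DP" "y \<in> DP" for x y
    using adj_left[OF M Mc F1 that] by (simp add: F1s_def)
  have F2L: "cinner (F2s x) y = cinner x (F2 y)" if "x \<in> DP" "y \<in> DP" for x y
    using adj_left[OF M Mc F2 that] by (simp add: F2s_def)
  have XL: "cinner (Xs x) y = cinner x (Xi y)" if "x \<in> DP" "y \<in> DP" for x y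
    using adj_left[OF M Mc Xi that] by (simp add: Xs_def)
  have mem: "F1 x \<in> DP" "F2 x \<in> DP" "Xi x \<in> DP" "F1s x \<in> DP" "F2s x \<in> DP" "Xs x \<in> DP"
    if "x \<in> DP" for x
    using that F1 F2 Xi F1sb F2sb Xsb by (simp_all add: bopD_in)
  have madd: "x + y \<in> DP" "x - y \<in> DP" if "x \<in> DP" "y \<in> DP" for x y
    using that M by (simp_all add: sub_add sub_diff)
  have lin: "F1 (x + y) = F1 x + F1 y" "F2 (x + y) = F2 x + F2 y" "Xi (x + y) = Xi x + Xi y"
    "F1s (x + y) = F1s x + F1s y" "F2s (x + y) = F2s x + F2s y" "Xs (x + y) = Xs x + Xs y"
    if "x \<in> DP" "y \<in> DP" for x y
    using that F1 F2 Xi F1sb F2sb Xsb by (simp_all add: bopD_add)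
  have zer: "F1 0 = 0" "F2 0 = 0" "Xi 0 = 0" "F1s 0 = 0" "F2s 0 = 0" "Xs 0 = 0"
    using F1 F2 Xi F1sb F2sb Xsb M by (simp_all add: bop_zero)
  note DPs = D_in DP0 mem madd

  have DF2D: "D (F2s (D z)) = adj UNIV B z - adj UNIV P (A z)" for z
  proof (rule inner_unique[OF csubspace_UNIV UNIV_I UNIV_I])
    fix x :: 'h
    have "cinner x (D (F2s (D z))) = cinner (D x) (F2s (D z))" by (simp add: Dsym)
    also have "\<dots> = cinner (F2 (D x)) (D z)" using F2R[of "D x" "D z"] D_in by simp
    also have "\<dots> = cinner (D (F2 (D x))) z" by (simp add: Dsym)
    also have "\<dots> = cinner (B x - adj UNIV A (P x)) z" using fund2 by simp
    also have "\<dots> = cinner x (adj UNIV B z) - cinner (P x) (A z)"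
      by (simp add: cinner_diff_left adjU_right[OF Bb] adjU_left[OF Ab])
    also have "\<dots> = cinner x (adj UNIV B z - adj UNIV P (A z))"
      by (simp add: cinner_diff_right adjU_right[OF Pb])
    finally show "cinner x (D (F2s (D z))) = cinner x (adj UNIV B z - adj UNIV P (A z))" .
  qed
  have DF1D: "D (F1s (D z)) = adj UNIV A z - adj UNIV P (B z)" for z
  proof (rule inner_unique[OF csubspace_UNIV UNIV_I UNIV_I])
    fix x :: 'h
    have "cinner x (D (F1s (D z))) = cinner (D x) (F1s (D z))" by (simp add: Dsym)
    also have "\<dots> = cinner (F1 (D x)) (D z)" using F1R[of "D x" "D z"] D_in by simp
    also have "\<dots> = cinner (D (F1 (D x))) z" by (simp add: Dsym)
    also have "\<dots> = cinner (A x - adj UNIV B (P x)) z" using fund1 by simp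
    also have "\<dots> = cinner x (adj UNIV A z) - cinner (P x) (B z)"
      by (simp add: cinner_diff_left adjU_right[OF Ab] adjU_left[OF Bb])
    also have "\<dots> = cinner x (adj UNIV A z - adj UNIV P (B z))"
      by (simp add: cinner_diff_right adjU_right[OF Pb])
    finally show "cinner x (D (F1s (D z))) = cinner x (adj UNIV A z - adj UNIV P (B z))" .
  qed
  have DA: "D (A h) = F1 (D h) + F2s (D (P h))" for h
  proof (rule DPinj_eq)
    show "D (A h) \<in> DP" by (rule D_in)
    show "F1 (D h) + F2s (D (P h)) \<in> DP" by (simp add: DPs)
    have "D (F1 (D h) + F2s (D (P h))) = D (F1 (D h)) + D (F2s (D (P h)))" by (rule Dadd)
    also have "\<dots> = (A h - adj UNIV B (P h)) + (adj UNIV B (P h) - adj UNIV P (A (P h)))"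
      using fund1 DF2D by simp
    also have "\<dots> = A h - adj UNIV P (P (A h))" using AP by simp
    also have "\<dots> = D (D (A h))" by (simp add: Dsq)
    finally show "D (D (A h)) = D (F1 (D h) + F2s (D (P h)))" by simp
  qed
  have DB: "D (B h) = F2 (D h) + F1s (D (P h))" for h
  proof (rule DPinj_eq)
    show "D (B h) \<in> DP" by (rule D_in)
    show "F2 (D h) + F1s (D (P h)) \<in> DP" by (simp add: DPs)
    have "D (F2 (D h) + F1s (D (P h))) = D (F2 (D h)) + D (F1s (D (P h)))" by (rule Dadd)
    also have "\<dots> = (B h - adj UNIV A (P h)) + (adj UNIV A (P h) - adj UNIV P (B (P h)))"
      using fund2 DF1D by simp
    also have "\<dots> = B h - adj UNIV P (P (B h))" using BP by simp
    also have "\<dots> = D (D (B h))" by (simp add: Dsq)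
    finally show "D (D (B h)) = D (F2 (D h) + F1s (D (P h)))" by simp
  qed

  define c1 where "c1 h n = (if n = 0 then Xi (D h) else if n = (1::nat) then F2s (D h) else 0)" for h n
  define c2 where "c2 h n = (if n = 0 then Xs (D h) else if n = (1::nat) then F1s (D h) else 0)" for h n
  define c3 where "c3 h n = (if n = (1::nat) then D h else 0)" for h n
  define T1 where "T1 = toeplitz [F1, Xi, F2s]"
  define T2 where "T2 = toeplitz [F2, Xs, F1s]"
  define T3 where "T3 = toeplitz [(\<lambda>_. 0) :: 'h \<Rightarrow> 'h, \<lambda>_. 0, id]"
  have V1e: "V1 (h, f) = (A h, \<lambda>n. c1 h n + T1 f n)" for h f
    unfolding V1_def c1_def T1_def F2s_def DP_def by simp
  have V2e: "V2 (h, f) = (B h, \<lambda>n. c2 h n + T2 f n)" for h f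
    unfolding V2_def c2_def T2_def F1s_def Xs_def DP_def by simp
  have V3e: "V3 (h, f) = (P h, \<lambda>n. c3 h n + T3 f n)" for h f
    unfolding V3_def c3_def T3_def by simp
  have b0: "bop DP (\<lambda>_. 0)" by (rule bop_const0[OF M])
  have bid: "bop DP id" by (rule bop_id)
  have cin: "c1 h n \<in> DP" "c2 h n \<in> DP" "c3 h n \<in> DP" for h n
    by (simp_all add: c1_def c2_def c3_def DPs)
  have Tin: "T1 g n \<in> DP" "T2 g n \<in> DP" "T3 g n \<in> DP" if "\<And>m. g m \<in> DP" for g n
    unfolding T1_def T2_def T3_def
    by (rule toe_in[OF M F1 Xi F2sb that], rule toe_in[OF M F2 Xsb F1sb that], rule toe_in[OF M b0 b0 bid that])
  have Tadd: "T1 (\<lambda>m. u m + v m) n = T1 u n + T1 v n" "T2 (\<lambda>m. u m + v m) n = T2 u n + T2 v n"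
    "T3 (\<lambda>m. u m + v m) n = T3 u n + T3 v n"
    if "\<And>m. u m \<in> DP" "\<And>m. v m \<in> DP" for u v n
    unfolding T1_def T2_def T3_def
    by (rule toe_add[OF M F1 Xi F2sb that], rule toe_add[OF M F2 Xsb F1sb that], rule toe_add[OF M b0 b0 bid that])

  have R12: "V1 (V2 (h, f)) = V2 (V1 (h, f)) \<longleftrightarrow>
      (\<forall>n. c1 (B h) n + (T1 (c2 h) n + T1 (T2 f) n) = c2 (A h) n + (T2 (c1 h) n + T2 (T1 f) n))"
    if f: "\<And>n. f n \<in> DP" for h f
  proof -
    have "V1 (V2 (h, f)) = (A (B h), \<lambda>n. c1 (B h) n + (T1 (c2 h) n + T1 (T2 f) n))"
      using Tadd(1)[of "c2 h" "T2 f"] cin Tin f by (simp add: V1e V2e)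
    moreover have "V2 (V1 (h, f)) = (B (A h), \<lambda>n. c2 (A h) n + (T2 (c1 h) n + T2 (T1 f) n))"
      using Tadd(2)[of "c1 h" "T1 f"] cin Tin f by (simp add: V1e V2e)
    ultimately show ?thesis by (simp add: AB fun_eq_iff)
  qed
  have R13: "V1 (V3 (h, f)) = V3 (V1 (h, f)) \<longleftrightarrow>
      (\<forall>n. c1 (P h) n + (T1 (c3 h) n + T1 (T3 f) n) = c3 (A h) n + (T3 (c1 h) n + T3 (T1 f) n))"
    if f: "\<And>n. f n \<in> DP" for h f
  proof -
    have "V1 (V3 (h, f)) = (A (P h), \<lambda>n. c1 (P h) n + (T1 (c3 h) n + T1 (T3 f) n))"
      using Tadd(1)[of "c3 h" "T3 f"] cin Tin f by (simp add: V1e V3e)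
    moreover have "V3 (V1 (h, f)) = (P (A h), \<lambda>n. c3 (A h) n + (T3 (c1 h) n + T3 (T1 f) n))"
      using Tadd(3)[of "c1 h" "T1 f"] cin Tin f by (simp add: V1e V3e)
    ultimately show ?thesis by (simp add: AP fun_eq_iff)
  qed
  have R23: "V2 (V3 (h, f)) = V3 (V2 (h, f)) \<longleftrightarrow>
      (\<forall>n. c2 (P h) n + (T2 (c3 h) n + T2 (T3 f) n) = c3 (B h) n + (T3 (c2 h) n + T3 (T2 f) n))"
    if f: "\<And>n. f n \<in> DP" for h f
  proof -
    have "V2 (V3 (h, f)) = (B (P h), \<lambda>n. c2 (P h) n + (T2 (c3 h) n + T2 (T3 f) n))"
      using Tadd(2)[of "c3 h" "T3 f"] cin Tin f by (simp add: V2e V3e)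
    moreover have "V3 (V2 (h, f)) = (P (B h), \<lambda>n. c3 (B h) n + (T3 (c2 h) n + T3 (T2 f) n))"
      using Tadd(3)[of "c2 h" "T2 f"] cin Tin f by (simp add: V2e V3e)
    ultimately show ?thesis by (simp add: BP fun_eq_iff)
  qed
  have T13: "T1 (T3 f) n = T3 (T1 f) n" if f: "\<And>n. f n \<in> DP" for f n
    unfolding T1_def T3_def
    by (rule toeplitz_comm[OF M F1 Xi F2sb b0 b0 bid f]) (simp_all add: zer)
  have T23: "T2 (T3 f) n = T3 (T2 f) n" if f: "\<And>n. f n \<in> DP" for f n
    unfolding T2_def T3_def
    by (rule toeplitz_comm[OF M F2 Xsb F1sb b0 b0 bid f]) (simp_all add: zer)
  have ell2D: "f n \<in> DP" if "f \<in> ell2 DP" for f n using that by (simp add: ell2_def)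
  have Kmem: "(h, f) \<in> K \<longleftrightarrow> f \<in> ell2 DP" for h f unfolding K_def DPdef0 by simp
  have c0: "c1 0 n = 0" "c2 0 n = 0" "c3 0 n = 0" for n
    using D0 zer by (simp_all add: c1_def c2_def c3_def)
  have T0: "T1 (\<lambda>_. 0) n = 0" "T2 (\<lambda>_. 0) n = 0" "T3 (\<lambda>_. 0) n = 0" for n
    using zer by (simp_all add: T1_def T2_def T3_def toe3)
  have zell: "(\<lambda>_. 0) \<in> ell2 DP" by (simp add: ell2_def DP0)

  have adj3: "F2s (F1s x) = F1s (F2s x)"
    if iii: "\<forall>x\<in>DP. F1 (F2 x) - F2 (F1 x) = 0" and x: "x \<in> DP" for x
  proof (rule inner_unique[OF M])
    show "F2s (F1s x) \<in> DP" "F1s (F2s x) \<in> DP" using x by (simp_all add: DPs)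
    fix y assume y: "y \<in> DP"
    have "cinner y (F2s (F1s x)) = cinner (F1 (F2 y)) x" using y x by (simp add: F2R[symmetric] F1R[symmetric] DPs)
    also have "\<dots> = cinner (F2 (F1 y)) x" using iii y by simp
    also have "\<dots> = cinner y (F1s (F2s x))" using y x by (simp add: F2R F1R DPs)
    finally show "cinner y (F2s (F1s x)) = cinner y (F1s (F2s x))" .
  qed
  have adj4: "Xi (F1s x) + F2s (Xs x) = Xs (F2s x) + F1s (Xi x)"
    if iv: "\<forall>x\<in>DP. Xi (F2 x) - F2 (Xi x) = Xs (F1 x) - F1 (Xs x)" and x: "x \<in> DP" for x
  proof (rule inner_unique[OF M])
    show "Xi (F1s x) + F2s (Xs x) \<in> DP" "Xs (F2s x) + F1s (Xi x) \<in> DP" using x by (simp_all add: DPs)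
    fix y assume y: "y \<in> DP"
    have e: "Xi (F2 y) + F1 (Xs y) = Xs (F1 y) + F2 (Xi y)" using iv y by (simp add: algebra_simps)
    have t1: "cinner y (Xi (F1s x)) = cinner (F1 (Xs y)) x"
    proof -
      have "cinner y (Xi (F1s x)) = cinner (Xs y) (F1s x)" using XL[of y "F1s x"] y x by (simp add: DPs)
      also have "\<dots> = cinner (F1 (Xs y)) x" using F1R[of "Xs y" x] y x by (simp add: DPs)
      finally show ?thesis .
    qed
    have t2: "cinner y (F2s (Xs x)) = cinner (Xi (F2 y)) x"
    proof -
      have "cinner y (F2s (Xs x)) = cinner (F2 y) (Xs x)" using F2R[of y "Xs x"] y x by (simp add: DPs)
      also have "\<dots> = cinner (Xi (F2 y)) x" using XR[of "F2 y" x] y x by (simp add: DPs)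
      finally show ?thesis .
    qed
    have t3: "cinner y (Xs (F2s x)) = cinner (F2 (Xi y)) x"
    proof -
      have "cinner y (Xs (F2s x)) = cinner (Xi y) (F2s x)" using XR[of y "F2s x"] y x by (simp add: DPs)
      also have "\<dots> = cinner (F2 (Xi y)) x" using F2R[of "Xi y" x] y x by (simp add: DPs)
      finally show ?thesis .
    qed
    have t4: "cinner y (F1s (Xi x)) = cinner (Xs (F1 y)) x"
    proof -
      have "cinner y (F1s (Xi x)) = cinner (F1 y) (Xi x)" using F1R[of y "Xi x"] y x by (simp add: DPs)
      also have "\<dots> = cinner (Xs (F1 y)) x" using XL[of "F1 y" x] y x by (simp add: DPs)
      finally show ?thesis .
    qed
    have "cinner y (Xi (F1s x) + F2s (Xs x)) = cinner (F1 (Xs y)) x + cinner (Xi (F2 y)) x"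
      by (simp add: cinner_add_right t1 t2)
    also have "\<dots> = cinner (Xi (F2 y) + F1 (Xs y)) x" by (simp add: cinner_add_left)
    also have "\<dots> = cinner (Xs (F1 y) + F2 (Xi y)) x" by (simp add: e)
    also have "\<dots> = cinner y (Xs (F2s x) + F1s (Xi x))"
      by (simp add: cinner_add_left cinner_add_right t3 t4 add.commute)
    finally show "cinner y (Xi (F1s x) + F2s (Xs x)) = cinner y (Xs (F2s x) + F1s (Xi x))" .
  qed

  have B12: "c1 (B h) n + T1 (c2 h) n = c2 (A h) n + T2 (c1 h) n"
    if ci: "\<forall>h. Xi (F1s (D (P h))) - Xs (F2s (D (P h))) = 0"
      and cii: "\<forall>x\<in>DP. (F2 (F2s x) - F2s (F2 x)) - (F1 (F1s x) - F1s (F1 x)) = Xi (Xs x) - Xs (Xi x)"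
      and ciii: "\<forall>x\<in>DP. F1 (F2 x) - F2 (F1 x) = 0"
      and civ: "\<forall>x\<in>DP. Xi (F2 x) - F2 (Xi x) = Xs (F1 x) - F1 (Xs x)" for h n
  proof -
    have u: "D h \<in> DP" and w: "D (P h) \<in> DP" by (simp_all add: D_in)
    consider (z) "n = 0" | (o) "n = 1" | (t) "n = 2" | (th) "n = 3" | (f) "n \<ge> 4" by linarith
    then show ?thesis
    proof cases
      case z
      have L: "c1 (B h) n + T1 (c2 h) n = Xi (F2 (D h)) + Xi (F1s (D (P h))) + F1 (Xs (D h))"
        using z by (simp add: c1_def c2_def T1_def toe3 DB lin DPs)
      have R: "c2 (A h) n + T2 (c1 h) n = Xs (F1 (D h)) + Xs (F2s (D (P h))) + F2 (Xi (D h))"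
        using z by (simp add: c1_def c2_def T2_def toe3 DA lin DPs)
      have e1: "Xi (F2 (D h)) - F2 (Xi (D h)) = Xs (F1 (D h)) - F1 (Xs (D h))" using civ u by simp
      have e2: "Xi (F1s (D (P h))) - Xs (F2s (D (P h))) = 0" using ci by simp
      show ?thesis unfolding L R using e1 e2 by (simp add: algebra_simps)
    next
      case o
      have L: "c1 (B h) n + T1 (c2 h) n = F2s (F2 (D h)) + F2s (F1s (D (P h))) + (F1 (F1s (D h)) + Xi (Xs (D h)))"
        using o by (simp add: c1_def c2_def T1_def toe3 DB lin DPs)
      have R: "c2 (A h) n + T2 (c1 h) n = F1s (F1 (D h)) + F1s (F2s (D (P h))) + (F2 (F2s (D h)) + Xs (Xi (D h)))"
        using o by (simp add: c1_def c2_def T2_def toe3 DA lin DPs)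
      have e1: "(F2 (F2s (D h)) - F2s (F2 (D h))) - (F1 (F1s (D h)) - F1s (F1 (D h))) = Xi (Xs (D h)) - Xs (Xi (D h))"
        using cii u by simp
      have e2: "F2s (F1s (D (P h))) = F1s (F2s (D (P h)))" by (rule adj3[OF ciii w])
      show ?thesis unfolding L R e2 using e1 by (simp add: algebra_simps)
    next
      case t
      have L: "c1 (B h) n + T1 (c2 h) n = Xi (F1s (D h)) + F2s (Xs (D h))"
        using t by (simp add: c1_def c2_def T1_def toe3 zer)
      have R: "c2 (A h) n + T2 (c1 h) n = Xs (F2s (D h)) + F1s (Xi (D h))"
        using t by (simp add: c1_def c2_def T2_def toe3 zer)
      show ?thesis unfolding L R by (rule adj4[OF civ u])
    next
      case th
      have L: "c1 (B h) n + T1 (c2 h) n = F2s (F1s (D h))"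
        using th by (simp add: c1_def c2_def T1_def toe3 zer)
      have R: "c2 (A h) n + T2 (c1 h) n = F1s (F2s (D h))"
        using th by (simp add: c1_def c2_def T2_def toe3 zer)
      show ?thesis unfolding L R by (rule adj3[OF ciii u])
    next
      case f
      have "n \<noteq> 0" "n \<noteq> 1" "n - 1 \<noteq> 0" "n - 1 \<noteq> 1" "n - 2 \<noteq> 0" "n - 2 \<noteq> 1" "n - Suc 0 \<noteq> Suc 0" "n - 2 \<noteq> Suc 0" "n \<noteq> Suc 0"
        using f by arith+
      thus ?thesis using f by (simp add: c1_def c2_def T1_def T2_def toe3 zer)
    qed
  qed
  have B13: "c1 (P h) n + T1 (c3 h) n = c3 (A h) n + T3 (c1 h) n"
    if cv: "\<forall>h. Xi (D (P h)) = 0" for h n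
  proof -
    consider (z) "n = 0" | (o) "n = 1" | (t) "n = 2" | (th) "n = 3" | (f) "n \<ge> 4" by linarith
    then show ?thesis
    proof cases
      case z thus ?thesis using cv by (simp add: c1_def c3_def T1_def T3_def toe3 zer)
    next
      case o thus ?thesis by (simp add: c1_def c3_def T1_def T3_def toe3 zer DA add.commute)
    next
      case t thus ?thesis by (simp add: c1_def c3_def T1_def T3_def toe3 zer)
    next
      case th thus ?thesis by (simp add: c1_def c3_def T1_def T3_def toe3 zer)
    next
      case f
      have "n \<noteq> 0" "n \<noteq> 1" "n - 1 \<noteq> 0" "n - 1 \<noteq> 1" "n - 2 \<noteq> 0" "n - 2 \<noteq> 1" "n - Suc 0 \<noteq> Suc 0" "n - 2 \<noteq> Suc 0" "n \<noteq> Suc 0"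
        using f by arith+
      thus ?thesis using f by (simp add: c1_def c3_def T1_def T3_def toe3 zer)
    qed
  qed
  have B23: "c2 (P h) n + T2 (c3 h) n = c3 (B h) n + T3 (c2 h) n"
    if cv: "\<forall>h. Xs (D (P h)) = 0" for h n
  proof -
    consider (z) "n = 0" | (o) "n = 1" | (t) "n = 2" | (th) "n = 3" | (f) "n \<ge> 4" by linarith
    then show ?thesis
    proof cases
      case z thus ?thesis using cv by (simp add: c2_def c3_def T2_def T3_def toe3 zer)
    next
      case o thus ?thesis by (simp add: c2_def c3_def T2_def T3_def toe3 zer DB add.commute)
    next
      case t thus ?thesis by (simp add: c2_def c3_def T2_def T3_def toe3 zer)
    next
      case th thus ?thesis by (simp add: c2_def c3_def T2_def T3_def toe3 zer)
    next
      case f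
      have "n \<noteq> 0" "n \<noteq> 1" "n - 1 \<noteq> 0" "n - 1 \<noteq> 1" "n - 2 \<noteq> 0" "n - 2 \<noteq> 1" "n - Suc 0 \<noteq> Suc 0" "n - 2 \<noteq> Suc 0" "n \<noteq> Suc 0"
        using f by arith+
      thus ?thesis using f by (simp add: c2_def c3_def T2_def T3_def toe3 zer)
    qed
  qed
  have fz: "T1 (\<lambda>_. 0) = (\<lambda>_. 0)" "T2 (\<lambda>_. 0) = (\<lambda>_. 0)" "T3 (\<lambda>_. 0) = (\<lambda>_. 0)"
    "c1 0 = (\<lambda>_. 0)" "c2 0 = (\<lambda>_. 0)"
    by (rule ext, simp add: T0 c0)+
  have B0: "B 0 = 0" by (rule bop_zero[OF Bb csubspace_UNIV])
  have A0: "A 0 = 0" by (rule bop_zero[OF Ab csubspace_UNIV])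

  show ?thesis
    unfolding F1s_def[symmetric] F2s_def[symmetric] Xs_def[symmetric]
  proof
    assume C: "(\<forall>k\<in>K. V1 (V2 k) = V2 (V1 k)) \<and> (\<forall>k\<in>K. V1 (V3 k) = V3 (V1 k)) \<and> (\<forall>k\<in>K. V2 (V3 k) = V3 (V2 k))"
    have C12: "\<forall>n. c1 (B h) n + (T1 (c2 h) n + T1 (T2 f) n) = c2 (A h) n + (T2 (c1 h) n + T2 (T1 f) n)"
      if "f \<in> ell2 DP" for h f
      using C R12[of f h] ell2D[OF that] that Kmem by blast
    have C13: "\<forall>n. c1 (P h) n + (T1 (c3 h) n + T1 (T3 f) n) = c3 (A h) n + (T3 (c1 h) n + T3 (T1 f) n)"
      if "f \<in> ell2 DP" for h f
      using C R13[of f h] ell2D[OF that] that Kmem by blast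
    have C23: "\<forall>n. c2 (P h) n + (T2 (c3 h) n + T2 (T3 f) n) = c3 (B h) n + (T3 (c2 h) n + T3 (T2 f) n)"
      if "f \<in> ell2 DP" for h f
      using C R23[of f h] ell2D[OF that] that Kmem by blast
    have v1: "\<forall>h. Xi (D (P h)) = 0"
    proof
      fix h
      have "c1 (P h) 0 + (T1 (c3 h) 0 + T1 (T3 (\<lambda>_. 0)) 0) = c3 (A h) 0 + (T3 (c1 h) 0 + T3 (T1 (\<lambda>_. 0)) 0)"
        using C13[OF zell, of h] by blast
      thus "Xi (D (P h)) = 0" by (simp add: fz c1_def c3_def T1_def T3_def toe3 zer)
    qed
    have v2: "\<forall>h. Xs (D (P h)) = 0"
    proof
      fix h
      have "c2 (P h) 0 + (T2 (c3 h) 0 + T2 (T3 (\<lambda>_. 0)) 0) = c3 (B h) 0 + (T3 (c2 h) 0 + T3 (T2 (\<lambda>_. 0)) 0)"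
        using C23[OF zell, of h] by blast
      thus "Xs (D (P h)) = 0" by (simp add: fz c2_def c3_def T2_def T3_def toe3 zer)
    qed
    have dl: "T1 (T2 d) n = T2 (T1 d) n" if x: "x \<in> DP" and d: "d = (\<lambda>n. if n = 0 then x else 0)" for x d n
    proof -
      have dD: "\<And>n. d n \<in> DP" using x DP0 d by simp
      have "summable (\<lambda>n. (cnorm (d n))\<^sup>2)" by (rule summable_finite[of "{0}"]) (simp_all add: d)
      hence "d \<in> ell2 DP" using dD by (simp add: ell2_def)
      from C12[OF this, of 0] show ?thesis by (simp add: fz B0 A0 c0)
    qed
    have iii_iv_ii: "F1 (F2 x) = F2 (F1 x) \<and> F1 (Xs x) + Xi (F2 x) = F2 (Xi x) + Xs (F1 x)
        \<and> F1 (F1s x) + Xi (Xs x) + F2s (F2 x) = F2 (F2s x) + Xs (Xi x) + F1s (F1 x)" if x: "x \<in> DP" for x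
    proof -
      define d where "d = (\<lambda>n::nat. if n = 0 then x else 0)"
      have l0: "T1 (T2 d) 0 = T2 (T1 d) 0" and l1: "T1 (T2 d) 1 = T2 (T1 d) 1" and l2: "T1 (T2 d) 2 = T2 (T1 d) 2"
        using dl[OF x d_def] by blast+
      note da = toeplitz_delta[OF M F1 Xi F2sb F2 Xsb F1sb x] and db = toeplitz_delta[OF M F2 Xsb F1sb F1 Xi F2sb x]
      show ?thesis using l0 l1 l2 da db unfolding T1_def T2_def d_def by simp
    qed
    have ciii: "\<forall>x\<in>DP. F1 (F2 x) - F2 (F1 x) = 0" using iii_iv_ii by simp
    have civ: "\<forall>x\<in>DP. Xi (F2 x) - F2 (Xi x) = Xs (F1 x) - F1 (Xs x)"
    proof
      fix x assume "x \<in> DP"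
      hence "F1 (Xs x) + Xi (F2 x) = F2 (Xi x) + Xs (F1 x)" using iii_iv_ii by blast
      thus "Xi (F2 x) - F2 (Xi x) = Xs (F1 x) - F1 (Xs x)" by (simp add: algebra_simps)
    qed
    have cii: "\<forall>x\<in>DP. (F2 (F2s x) - F2s (F2 x)) - (F1 (F1s x) - F1s (F1 x)) = Xi (Xs x) - Xs (Xi x)"
    proof
      fix x assume "x \<in> DP"
      hence "F1 (F1s x) + Xi (Xs x) + F2s (F2 x) = F2 (F2s x) + Xs (Xi x) + F1s (F1 x)" using iii_iv_ii by blast
      thus "(F2 (F2s x) - F2s (F2 x)) - (F1 (F1s x) - F1s (F1 x)) = Xi (Xs x) - Xs (Xi x)"
        by (simp add: algebra_simps)
    qed
    have ci: "\<forall>h. Xi (F1s (D (P h))) - Xs (F2s (D (P h))) = 0"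
    proof
      fix h
      have "c1 (B h) 0 + (T1 (c2 h) 0 + T1 (T2 (\<lambda>_. 0)) 0) = c2 (A h) 0 + (T2 (c1 h) 0 + T2 (T1 (\<lambda>_. 0)) 0)"
        using C12[OF zell, of h] by blast
      hence L: "Xi (F2 (D h)) + Xi (F1s (D (P h))) + F1 (Xs (D h)) = Xs (F1 (D h)) + Xs (F2s (D (P h))) + F2 (Xi (D h))"
        by (simp add: fz c1_def c2_def T1_def T2_def toe3 DA DB lin DPs add.assoc zer)
      have e1: "Xi (F2 (D h)) - F2 (Xi (D h)) = Xs (F1 (D h)) - F1 (Xs (D h))" using civ D_in by simp
      have idt: "Xi (F1s (D (P h))) - Xs (F2s (D (P h))) =
          ((Xi (F2 (D h)) + Xi (F1s (D (P h))) + F1 (Xs (D h))) - (Xs (F1 (D h)) + Xs (F2s (D (P h))) + F2 (Xi (D h))))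
          - ((Xi (F2 (D h)) - F2 (Xi (D h))) - (Xs (F1 (D h)) - F1 (Xs (D h))))"
        by (simp add: algebra_simps)
      show "Xi (F1s (D (P h))) - Xs (F2s (D (P h))) = 0" unfolding idt L e1 by simp
    qed
    show "(\<forall>h. Xi (F1s (D (P h))) - Xs (F2s (D (P h))) = 0)
        \<and> (\<forall>x\<in>DP. (F2 (F2s x) - F2s (F2 x)) - (F1 (F1s x) - F1s (F1 x)) = Xi (Xs x) - Xs (Xi x))
        \<and> (\<forall>x\<in>DP. F1 (F2 x) - F2 (F1 x) = 0)
        \<and> (\<forall>x\<in>DP. Xi (F2 x) - F2 (Xi x) = Xs (F1 x) - F1 (Xs x))
        \<and> (\<forall>h. Xi (D (P h)) = 0) \<and> (\<forall>h. Xs (D (P h)) = 0)"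
      using ci cii ciii civ v1 v2 by blast
  next
    assume H: "(\<forall>h. Xi (F1s (D (P h))) - Xs (F2s (D (P h))) = 0)
        \<and> (\<forall>x\<in>DP. (F2 (F2s x) - F2s (F2 x)) - (F1 (F1s x) - F1s (F1 x)) = Xi (Xs x) - Xs (Xi x))
        \<and> (\<forall>x\<in>DP. F1 (F2 x) - F2 (F1 x) = 0)
        \<and> (\<forall>x\<in>DP. Xi (F2 x) - F2 (Xi x) = Xs (F1 x) - F1 (Xs x))
        \<and> (\<forall>h. Xi (D (P h)) = 0) \<and> (\<forall>h. Xs (D (P h)) = 0)"
    hence ci: "\<forall>h. Xi (F1s (D (P h))) - Xs (F2s (D (P h))) = 0"
      and cii: "\<forall>x\<in>DP. (F2 (F2s x) - F2s (F2 x)) - (F1 (F1s x) - F1s (F1 x)) = Xi (Xs x) - Xs (Xi x)"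
      and ciii: "\<forall>x\<in>DP. F1 (F2 x) - F2 (F1 x) = 0"
      and civ: "\<forall>x\<in>DP. Xi (F2 x) - F2 (Xi x) = Xs (F1 x) - F1 (Xs x)"
      and cv1: "\<forall>h. Xi (D (P h)) = 0" and cv2: "\<forall>h. Xs (D (P h)) = 0" by blast+
    have T12: "T1 (T2 f) n = T2 (T1 f) n" if f: "\<And>n. f n \<in> DP" for f n
      unfolding T1_def T2_def
    proof (rule toeplitz_comm[OF M F1 Xi F2sb F2 Xsb F1sb f])
      fix x assume x: "x \<in> DP"
      show "F1 (F2 x) = F2 (F1 x)" using ciii x by simp
      show "F1 (Xs x) + Xi (F2 x) = F2 (Xi x) + Xs (F1 x)"
        using civ x by (simp add: algebra_simps)
      show "F1 (F1s x) + Xi (Xs x) + F2s (F2 x) = F2 (F2s x) + Xs (Xi x) + F1s (F1 x)"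
        using cii x by (simp add: algebra_simps)
      show "Xi (F1s x) + F2s (Xs x) = Xs (F2s x) + F1s (Xi x)" by (rule adj4[OF civ x])
      show "F2s (F1s x) = F1s (F2s x)" by (rule adj3[OF ciii x])
    qed
    have "\<forall>k\<in>K. V1 (V2 k) = V2 (V1 k)"
    proof
      fix k assume k: "k \<in> K"
      obtain h f where hf: "k = (h, f)" by (cases k)
      have f: "\<And>n. f n \<in> DP" using k hf Kmem ell2D by blast
      have "\<forall>n. c1 (B h) n + (T1 (c2 h) n + T1 (T2 f) n) = c2 (A h) n + (T2 (c1 h) n + T2 (T1 f) n)"
      proof
        fix n
        have "c1 (B h) n + T1 (c2 h) n = c2 (A h) n + T2 (c1 h) n" by (rule B12[OF ci cii ciii civ])
        thus "c1 (B h) n + (T1 (c2 h) n + T1 (T2 f) n) = c2 (A h) n + (T2 (c1 h) n + T2 (T1 f) n)"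
          using T12[of f n, OF f] by (simp add: add.assoc[symmetric])
      qed
      thus "V1 (V2 k) = V2 (V1 k)" using R12[OF f, of h] hf by simp
    qed
    moreover have "\<forall>k\<in>K. V1 (V3 k) = V3 (V1 k)"
    proof
      fix k assume k: "k \<in> K"
      obtain h f where hf: "k = (h, f)" by (cases k)
      have f: "\<And>n. f n \<in> DP" using k hf Kmem ell2D by blast
      have "\<forall>n. c1 (P h) n + (T1 (c3 h) n + T1 (T3 f) n) = c3 (A h) n + (T3 (c1 h) n + T3 (T1 f) n)"
      proof
        fix n
        have "c1 (P h) n + T1 (c3 h) n = c3 (A h) n + T3 (c1 h) n" by (rule B13[OF cv1])
        thus "c1 (P h) n + (T1 (c3 h) n + T1 (T3 f) n) = c3 (A h) n + (T3 (c1 h) n + T3 (T1 f) n)"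
          using T13[of f n, OF f] by (simp add: add.assoc[symmetric])
      qed
      thus "V1 (V3 k) = V3 (V1 k)" using R13[OF f, of h] hf by simp
    qed
    moreover have "\<forall>k\<in>K. V2 (V3 k) = V3 (V2 k)"
    proof
      fix k assume k: "k \<in> K"
      obtain h f where hf: "k = (h, f)" by (cases k)
      have f: "\<And>n. f n \<in> DP" using k hf Kmem ell2D by blast
      have "\<forall>n. c2 (P h) n + (T2 (c3 h) n + T2 (T3 f) n) = c3 (B h) n + (T3 (c2 h) n + T3 (T2 f) n)"
      proof
        fix n
        have "c2 (P h) n + T2 (c3 h) n = c3 (B h) n + T3 (c2 h) n" by (rule B23[OF cv2])
        thus "c2 (P h) n + (T2 (c3 h) n + T2 (T3 f) n) = c3 (B h) n + (T3 (c2 h) n + T3 (T2 f) n)"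
          using T23[of f n, OF f] by (simp add: add.assoc[symmetric])
      qed
      thus "V2 (V3 k) = V3 (V2 k)" using R23[OF f, of h] hf by simp
    qed
    ultimately show "(\<forall>k\<in>K. V1 (V2 k) = V2 (V1 k)) \<and> (\<forall>k\<in>K. V1 (V3 k) = V3 (V1 k)) \<and> (\<forall>k\<in>K. V2 (V3 k) = V3 (V2 k))"
      by blast
  qed
qed


end
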